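(* Let $M=I=[0,1]$ or $M=\mathbb{S}^1$, and let $\mathrm{Diff}_+^{1+BV}(M)$ (orientation-preserving $C^1$ diffeomorphisms of $M$ whose derivative has bounded variation) be endowed with the metric $$d(f,g)=\sup_{x\in M} d_M(f(x),g(x))+\|\log f'-\log g'\|_{BV}.$$ Let $\mathrm{Diff}_+^{1+AC}(M)$ be the subgroup of those $f$ whose derivative $f'$ is absolutely continuous. Then for every $g\in \mathrm{Diff}_+^{1+BV}(M)\setminus \mathrm{Diff}_+^{1+AC}(M)$, the left multiplication map $f\mapsto g\circ f$, $\mathrm{Diff}_+^{1+BV}(M)\to\mathrm{Diff}_+^{1+BV}(M)$, is not continuous with respect to $d$.
   Context: $\mathbb{S}^1$ is $I$ with $0\sim 1$, with metric $d_{\mathbb{S}^1}([x],[y])=|e^{2\pi ix}-e^{2\pi iy}|$; $d_I$ is the usual metric. Derivatives of circle diffeomorphisms are defined via the lift $\tilde f$ ($\tilde f(0)\in[0,1)$, $\tilde f(x+1)=\tilde f(x)+1$) by $f'(x)=\tilde f'(x)$ for $x\in I$. For $F\in C(I)$ of bounded variation, $V(F)=\sup\sum_{i=1}^m|F(x_i)-F(x_{i-1})|$ over partitions $0=x_0<\dots<x_m=1$, and $\|F\|_{BV}=|F(0)|+V(F)$. *)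

theory Defs
  imports "HOL-Analysis.Analysis"
begin

datatype space = Intv | Circ

definition partition01 :: "nat \<Rightarrow> (nat \<Rightarrow> real) \<Rightarrow> bool" where
  "partition01 m xs \<longleftrightarrow> xs 0 = 0 \<and> xs m = 1 \<and> (\<forall>i<m. xs i < xs (Suc i))"

definition var_sums :: "(real \<Rightarrow> real) \<Rightarrow> real set" where
  "var_sums F = {(\<Sum>i<m. \<bar>F (xs (Suc i)) - F (xs i)\<bar>) | m xs. partition01 m xs}"

definition bv01 :: "(real \<Rightarrow> real) \<Rightarrow> bool" where
  "bv01 F \<longleftrightarrow> bdd_above (var_sums F)"

text \<open>Total variation V(F) on I (meaningful when bv01 F).\<close>
definition V01 :: "(real \<Rightarrow> real) \<Rightarrow> real" where
  "V01 F = Sup (var_sums F)"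

definition BVnorm :: "(real \<Rightarrow> real) \<Rightarrow> real" where
  "BVnorm F = \<bar>F 0\<bar> + V01 F"

definition abs_cont01 :: "(real \<Rightarrow> real) \<Rightarrow> bool" where
  "abs_cont01 F \<longleftrightarrow> (\<forall>\<epsilon>>0. \<exists>\<delta>>0. \<forall>(n::nat) (a::nat \<Rightarrow> real) b.
      (\<forall>i<n. 0 \<le> a i \<and> a i \<le> b i \<and> b i \<le> 1) \<and>
      (\<forall>i<n. \<forall>j<n. i \<noteq> j \<longrightarrow> b i \<le> a j \<or> b j \<le> a i) \<and>
      (\<Sum>i<n. b i - a i) < \<delta> \<longrightarrow> (\<Sum>i<n. \<bar>F (b i) - F (a i)\<bar>) < \<epsilon>)"

text \<open>Derivative f'(x) for x in I.  For M = I, f is the diffeomorphism itself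
  (one-sided derivatives at the endpoints); for M = S^1, f is the normalized lift.\<close>
definition D :: "(real \<Rightarrow> real) \<Rightarrow> real \<Rightarrow> real" where
  "D f x = vector_derivative f (at x within {0..1})"

text \<open>For M = S^1: represented by the
  lift F with F 0 in [0,1) and F (x+1) = F x + 1, F C^1 with positive derivative.\<close>
fun Diff1 :: "space \<Rightarrow> (real \<Rightarrow> real) set" where
  "Diff1 Intv = {f. f 0 = 0 \<and> f 1 = 1 \<and> (\<exists>f'. continuous_on {0..1} f' \<and>
        (\<forall>x\<in>{0..1}. (f has_real_derivative f' x) (at x within {0..1}) \<and> f' x > 0))}"
| "Diff1 Circ = {F. 0 \<le> F 0 \<and> F 0 < 1 \<and> (\<forall>x. F (x + 1) = F x + 1) \<and>
        (\<exists>F'. continuous_on UNIV F' \<and> (\<forall>x. (F has_real_derivative F' x) (at x) \<and> F' x > 0))}"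

definition Diff1BV :: "space \<Rightarrow> (real \<Rightarrow> real) set" where
  "Diff1BV M = {f \<in> Diff1 M. bv01 (D f)}"

definition Diff1AC :: "space \<Rightarrow> (real \<Rightarrow> real) set" where
  "Diff1AC M = {f \<in> Diff1BV M. abs_cont01 (D f)}"

text \<open>Distance on M, on representatives (for S^1: points of R modulo 1).\<close>
fun distM :: "space \<Rightarrow> real \<Rightarrow> real \<Rightarrow> real" where
  "distM Intv x y = \<bar>x - y\<bar>"
| "distM Circ x y = cmod (cis (2 * pi * x) - cis (2 * pi * y))"

definition dDiff :: "space \<Rightarrow> (real \<Rightarrow> real) \<Rightarrow> (real \<Rightarrow> real) \<Rightarrow> real" where
  "dDiff M f g = (SUP x\<in>{0..1}. distM M (f x) (g x)) + BVnorm (\<lambda>x. ln (D f x) - ln (D g x))"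

text \<open>Composition g o f in Diff(M); for S^1 the lift G o F is renormalized so that its value at 0
  lies in [0,1).\<close>
fun compM :: "space \<Rightarrow> (real \<Rightarrow> real) \<Rightarrow> (real \<Rightarrow> real) \<Rightarrow> (real \<Rightarrow> real)" where
  "compM Intv g f = g \<circ> f"
| "compM Circ g f = (\<lambda>x. g (f x) - of_int \<lfloor>g (f 0)\<rfloor>)"

end

theory Submission
  imports Defs
begin

definition part :: "real \<Rightarrow> real \<Rightarrow> nat \<Rightarrow> (nat \<Rightarrow> real) \<Rightarrow> bool" where
  "part u v m xs \<longleftrightarrow> xs 0 = u \<and> xs m = v \<and> (\<forall>i<m. xs i < xs (Suc i))"

definition psum :: "(real \<Rightarrow> real) \<Rightarrow> nat \<Rightarrow> (nat \<Rightarrow> real) \<Rightarrow> real" where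
  "psum F m xs = (\<Sum>i<m. \<bar>F (xs (Suc i)) - F (xs i)\<bar>)"

lemma partition01_part: "partition01 m xs = part 0 1 m xs"
  by (simp add: partition01_def part_def)

lemma var_sums_eq: "var_sums F = {psum F m xs | m xs. part 0 1 m xs}"
  by (simp add: var_sums_def psum_def partition01_part)

lemma part_mono: assumes "part u v m xs" "i \<le> j" "j \<le> m" shows "xs i \<le> xs j"
  using assms(2,3)
proof (induction j)
  case 0 then show ?case by simp
next
  case (Suc j)
  show ?case
  proof (cases "i = Suc j")
    case False
    then have "xs i \<le> xs j" using Suc by auto
    also have "xs j < xs (Suc j)" using assms(1) Suc.prems unfolding part_def by auto
    finally show ?thesis by simp
  qed simp
qed

lemma part_strict: assumes "part u v m xs" "i < j" "j \<le> m" shows "xs i < xs j"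
proof -
  have "xs i < xs (Suc i)" using assms unfolding part_def by auto
  also have "xs (Suc i) \<le> xs j" using part_mono[OF assms(1)] assms by auto
  finally show ?thesis .
qed

lemma part_range: assumes "part u v m xs" "i \<le> m" shows "xs i \<in> {u..v}"
  using part_mono[OF assms(1), of 0 i] part_mono[OF assms(1), of i m] assms
  unfolding part_def by auto

lemma part_uv: assumes "part u v m xs" shows "u \<le> v"
  using part_mono[OF assms, of 0 m] assms unfolding part_def by auto

lemma part_pos: assumes "part u v m xs" "u < v" shows "m > 0"
  using assms unfolding part_def by (cases m) auto

lemma psum_cong: assumes "part u v m xs" "\<And>x. x \<in> {u..v} \<Longrightarrow> F x = G x"
  shows "psum F m xs = psum G m xs"
  unfolding psum_def
proof (rule sum.cong)
  fix i assume "i \<in> {..<m}"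
  then have "xs i \<in> {u..v}" "xs (Suc i) \<in> {u..v}" using part_range[OF assms(1)] by auto
  then show "\<bar>F (xs (Suc i)) - F (xs i)\<bar> = \<bar>G (xs (Suc i)) - G (xs i)\<bar>" using assms(2) by simp
qed simp

lemma part_snoc: assumes "part u w m xs" "w < v"
  shows "part u v (Suc m) (xs(Suc m := v))"
    "psum F (Suc m) (xs(Suc m := v)) = psum F m xs + \<bar>F v - F w\<bar>"
proof -
  show "part u v (Suc m) (xs(Suc m := v))"
    using assms unfolding part_def by (auto simp: less_Suc_eq)
  have "psum F m (xs(Suc m := v)) = psum F m xs"
    unfolding psum_def by (rule sum.cong) auto
  then show "psum F (Suc m) (xs(Suc m := v)) = psum F m xs + \<bar>F v - F w\<bar>"
    using assms unfolding psum_def part_def by simp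
qed

lemma part_one: "u < v \<Longrightarrow> part u v 1 (\<lambda>i. if i = 0 then u else v)"
  unfolding part_def by auto

lemma psum_nonneg: "psum F m xs \<ge> 0"
  unfolding psum_def by (auto intro: sum_nonneg)

definition fam :: "real \<Rightarrow> real \<Rightarrow> 'i set \<Rightarrow> ('i \<Rightarrow> real) \<Rightarrow> ('i \<Rightarrow> real) \<Rightarrow> bool" where
  "fam u v I a b \<longleftrightarrow> finite I \<and> (\<forall>i\<in>I. u \<le> a i \<and> a i \<le> b i \<and> b i \<le> v) \<and>
     (\<forall>i\<in>I. \<forall>j\<in>I. i \<noteq> j \<longrightarrow> b i \<le> a j \<or> b j \<le> a i)"

definition fs :: "(real \<Rightarrow> real) \<Rightarrow> 'i set \<Rightarrow> ('i \<Rightarrow> real) \<Rightarrow> ('i \<Rightarrow> real) \<Rightarrow> real" where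
  "fs F I a b = (\<Sum>i\<in>I. \<bar>F (b i) - F (a i)\<bar>)"

lemma FP_aux:
  fixes a b :: "'i \<Rightarrow> real"
  assumes "finite I"
  shows "\<forall>v. u < v \<longrightarrow> fam u v I a b \<longrightarrow> (\<exists>m xs. part u v m xs \<and> fs F I a b \<le> psum F m xs)"
  using assms
proof (induction rule: finite_ranking_induct[where f = a])
  case empty
  show ?case
  proof (intro allI impI)
    fix v assume "u < v"
    then show "\<exists>m xs. part u v m xs \<and> fs F {} a b \<le> psum F m xs"
      using part_one[of u v] psum_nonneg by (auto simp: fs_def)
  qed
next
  case (insert x S)
  show ?case
  proof (intro allI impI)
    fix v assume uv: "u < v" and fx: "fam u v (insert x S) a b"
    have fS: "fam u v S a b" using fx unfolding fam_def by auto
    show "\<exists>m xs. part u v m xs \<and> fs F (insert x S) a b \<le> psum F m xs"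
    proof (cases "x \<in> S")
      case True
      then show ?thesis using insert.IH uv fS by (auto simp: insert_absorb)
    next
      case xS: False
      have fsx: "fs F (insert x S) a b = \<bar>F (b x) - F (a x)\<bar> + fs F S a b"
        using xS insert.hyps(1) by (simp add: fs_def)
      show ?thesis
      proof (cases "a x = b x")
        case True
        then show ?thesis using insert.IH uv fS fsx by auto
      next
        case False
        then have ab: "a x < b x" using fx unfolding fam_def by auto
        have below: "\<forall>y\<in>S. b y \<le> a x"
        proof
          fix y assume y: "y \<in> S"
          then have "y \<noteq> x" using xS by auto
          then have "b y \<le> a x \<or> b x \<le> a y" using fx y unfolding fam_def by auto
          moreover have "a y \<le> a x" using insert.hyps(2) y .
          ultimately show "b y \<le> a x" using ab by auto
        qed
        have bxv: "b x \<le> v" and uax: "u \<le> a x" using fx unfolding fam_def by auto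
        obtain m xs where mx: "part u (b x) m xs" "fs F (insert x S) a b \<le> psum F m xs"
        proof (cases "u < a x")
          case True
          have "fam u (a x) S a b" using fS below unfolding fam_def by auto
          then obtain m xs where "part u (a x) m xs" "fs F S a b \<le> psum F m xs"
            using insert.IH True by blast
          then show ?thesis using part_snoc(1)[OF \<open>part u (a x) m xs\<close> ab] part_snoc(2)[OF \<open>part u (a x) m xs\<close> ab, of F] fsx that by auto
        next
          case False
          then have ux: "u = a x" using uax by auto
          have "fs F S a b = 0"
            unfolding fs_def
          proof (rule sum.neutral, intro ballI)
            fix y assume "y \<in> S"
            then have "a y = b y" using below fS ux unfolding fam_def by force
            then show "\<bar>F (b y) - F (a y)\<bar> = 0" by simp
          qed
          then show ?thesis using that[OF part_one[of u "b x"]] ab ux fsx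
            by (simp add: psum_def)
        qed
        show ?thesis
        proof (cases "b x < v")
          case True
          show ?thesis
            using part_snoc(1)[OF mx(1) True] part_snoc(2)[OF mx(1) True, of F] mx(2) by (intro exI[of _ "Suc m"]) force
        next
          case False
          then have "b x = v" using bxv by auto
          then show ?thesis using mx by auto
        qed
      qed
    qed
  qed
qed

lemma FP:
  assumes "u < v" "fam u v I a b"
  shows "\<exists>m xs. part u v m xs \<and> fs F I a b \<le> psum F m xs"
  using FP_aux[of I u a b F] assms unfolding fam_def by auto

lemma fam_union:
  fixes a b :: "'i \<Rightarrow> real" and c d :: "'j \<Rightarrow> real"
  assumes "fam u w I a b" "fam w v J c d" "u \<le> w" "w \<le> v"
  shows "fam u v (Inl ` I \<union> Inr ` J) (case_sum a c) (case_sum b d)"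
    "fs F (Inl ` I \<union> Inr ` J) (case_sum a c) (case_sum b d) = fs F I a b + fs F J c d"
proof -
  show "fam u v (Inl ` I \<union> Inr ` J) (case_sum a c) (case_sum b d)"
    unfolding fam_def
  proof (intro conjI ballI impI)
    show "finite (Inl ` I \<union> Inr ` J)" using assms unfolding fam_def by auto
    fix k assume k: "k \<in> Inl ` I \<union> Inr ` J"
    show "u \<le> case_sum a c k" "case_sum a c k \<le> case_sum b d k" "case_sum b d k \<le> v"
      using k assms unfolding fam_def by (auto)
    fix l assume l: "l \<in> Inl ` I \<union> Inr ` J" "k \<noteq> l"
    show "case_sum b d k \<le> case_sum a c l \<or> case_sum b d l \<le> case_sum a c k"
    proof (cases k)
      case (Inl i)
      then have i: "i \<in> I" using k by auto
      show ?thesis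
      proof (cases l)
        case (Inl j)
        then show ?thesis using i \<open>k = Inl i\<close> l assms(1) unfolding fam_def by auto
      next
        case (Inr j)
        then have "j \<in> J" using l by auto
        then show ?thesis using i \<open>k = Inl i\<close> Inr assms(1,2) unfolding fam_def by force
      qed
    next
      case (Inr i)
      then have i: "i \<in> J" using k by auto
      show ?thesis
      proof (cases l)
        case (Inl j)
        then have "j \<in> I" using l by auto
        then show ?thesis using i \<open>k = Inr i\<close> Inl assms(1,2) unfolding fam_def by force
      next
        case (Inr j)
        then show ?thesis using i \<open>k = Inr i\<close> l assms(2) unfolding fam_def by auto
      qed
    qed
  qed
  have "fs F (Inl ` I \<union> Inr ` J) (case_sum a c) (case_sum b d) =
     fs F (Inl ` I) (case_sum a c) (case_sum b d) + fs F (Inr ` J) (case_sum a c) (case_sum b d)"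
    unfolding fs_def using assms unfolding fam_def by (intro sum.union_disjoint) auto
  also have "\<dots> = fs F I a b + fs F J c d"
    unfolding fs_def by (simp add: sum.reindex)
  finally show "fs F (Inl ` I \<union> Inr ` J) (case_sum a c) (case_sum b d) = fs F I a b + fs F J c d" .
qed

lemma fam_map:
  assumes "fam u v I a b" "\<And>x y. x \<le> y \<Longrightarrow> c x \<le> c y" "\<And>x. x \<in> {u..v} \<Longrightarrow> c x \<in> {p..q}"
  shows "fam p q I (\<lambda>i. c (a i)) (\<lambda>i. c (b i))"
  unfolding fam_def
proof (intro conjI ballI impI)
  show "finite I" using assms(1) unfolding fam_def by auto
  fix i assume i: "i \<in> I"
  then have r: "a i \<in> {u..v}" "b i \<in> {u..v}" "a i \<le> b i" using assms(1) unfolding fam_def by auto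
  show "p \<le> c (a i)" using assms(3)[OF r(1)] by auto
  show "c (a i) \<le> c (b i)" using assms(2)[OF r(3)] .
  show "c (b i) \<le> q" using assms(3)[OF r(2)] by auto
  fix j assume j: "j \<in> I" "i \<noteq> j"
  then have "b i \<le> a j \<or> b j \<le> a i" using i assms(1) unfolding fam_def by auto
  then show "c (b i) \<le> c (a j) \<or> c (b j) \<le> c (a i)" using assms(2) by blast
qed

lemma fam_sub: "fam u v I a b \<Longrightarrow> p \<le> u \<Longrightarrow> v \<le> q \<Longrightarrow> fam p q I a b"
  unfolding fam_def by force

lemma fam_part: assumes "part u v m xs" shows "fam u v {..<m} xs (\<lambda>i. xs (Suc i))"
  "fs F {..<m} xs (\<lambda>i. xs (Suc i)) = psum F m xs"
proof -
  show "fam u v {..<m} xs (\<lambda>i. xs (Suc i))"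
    unfolding fam_def
  proof (intro conjI ballI impI)
    fix i j assume "i \<in> {..<m}" "j \<in> {..<m}" "i \<noteq> j"
    then show "xs (Suc i) \<le> xs j \<or> xs (Suc j) \<le> xs i"
      using part_mono[OF assms, of "Suc i" j] part_mono[OF assms, of "Suc j" i] by (cases "i < j") auto
  qed (use part_range[OF assms] part_mono[OF assms] in auto)
  show "fs F {..<m} xs (\<lambda>i. xs (Suc i)) = psum F m xs" by (simp add: fs_def psum_def)
qed

lemma fs_le_bound:
  assumes "\<And>m xs. part 0 1 m xs \<Longrightarrow> psum F m xs \<le> B" "fam 0 1 I a b"
  shows "fs F I a b \<le> B"
  using FP[of 0 1 I a b F] assms by force

lemma psum_lip:
  assumes "part 0 1 m xs" "\<And>x y. x \<in> {0..1} \<Longrightarrow> y \<in> {0..1} \<Longrightarrow> \<bar>F x - F y\<bar> \<le> L * \<bar>x - y\<bar>"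
  shows "psum F m xs \<le> L"
proof -
  have "psum F m xs \<le> (\<Sum>i<m. L * (xs (Suc i) - xs i))"
    unfolding psum_def
  proof (rule sum_mono)
    fix i assume i: "i \<in> {..<m}"
    then have "xs i \<in> {0..1}" "xs (Suc i) \<in> {0..1}" "xs i < xs (Suc i)"
      using part_range[OF assms(1)] assms(1) unfolding part_def by auto
    then show "\<bar>F (xs (Suc i)) - F (xs i)\<bar> \<le> L * (xs (Suc i) - xs i)"
      using assms(2)[of "xs (Suc i)" "xs i"] by auto
  qed
  also have "\<dots> = L * (xs m - xs 0)"
    by (simp add: sum_distrib_left[symmetric] sum_lessThan_telescope)
  also have "\<dots> = L" using assms(1) unfolding part_def by simp
  finally show ?thesis .
qed

lemma psum_add: "psum (\<lambda>x. F x + G x) m xs \<le> psum F m xs + psum G m xs"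
  unfolding psum_def sum.distrib[symmetric] by (rule sum_mono) linarith

lemma psum_diff: "psum (\<lambda>x. F x - G x) m xs \<le> psum F m xs + psum G m xs"
  unfolding psum_def sum.distrib[symmetric] by (rule sum_mono) linarith

lemma part_comp:
  assumes "part 0 1 m xs" "h 0 = 0" "h 1 = 1" "\<And>x y. x \<in> {0..1} \<Longrightarrow> y \<in> {0..1} \<Longrightarrow> x < y \<Longrightarrow> h x < h y"
  shows "part 0 1 m (\<lambda>i. h (xs i))" "psum (\<lambda>x. F (h x)) m xs = psum F m (\<lambda>i. h (xs i))"
proof -
  show "part 0 1 m (\<lambda>i. h (xs i))"
    using assms part_range[OF assms(1)] unfolding part_def by auto
qed (simp add: psum_def)

lemma part_refl:
  assumes "part 0 1 m xs"
  shows "part 0 1 m (\<lambda>i. 1 - xs (m - i))" "psum (\<lambda>x. F (1 - x)) m (\<lambda>i. 1 - xs (m - i)) = psum F m xs"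
proof -
  show "part 0 1 m (\<lambda>i. 1 - xs (m - i))"
    using assms unfolding part_def
  proof (intro conjI allI impI)
    fix i assume "i < m"
    then have "m - i = Suc (m - Suc i)" by auto
    then show "1 - xs (m - i) < 1 - xs (m - Suc i)" using assms \<open>i < m\<close> unfolding part_def by auto
  qed auto
  have "psum (\<lambda>x. F (1 - x)) m (\<lambda>i. 1 - xs (m - i)) = (\<Sum>i<m. \<bar>F (xs (m - Suc i)) - F (xs (Suc (m - Suc i)))\<bar>)"
    unfolding psum_def by (rule sum.cong) (auto simp: Suc_diff_Suc)
  also have "\<dots> = (\<Sum>i<m. \<bar>F (xs i) - F (xs (Suc i))\<bar>)"
    by (rule sum.nat_diff_reindex)
  also have "\<dots> = psum F m xs" unfolding psum_def by (simp add: abs_minus_commute)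
  finally show "psum (\<lambda>x. F (1 - x)) m (\<lambda>i. 1 - xs (m - i)) = psum F m xs" .
qed

lemma left_end:
  fixes \<phi> :: "real \<Rightarrow> real"
  assumes cont: "continuous_on {0..1} \<phi>" and bnd: "\<And>m xs. part 0 1 m xs \<Longrightarrow> psum \<phi> m xs \<le> B"
    and e: "\<epsilon> > 0"
  shows "\<exists>\<eta>>0. \<eta> \<le> 1 \<and> (\<forall>(J::'j set) c d. fam 0 \<eta> J c d \<longrightarrow> fs \<phi> J c d < \<epsilon>)"
proof -
  define S where "S = {psum \<phi> m xs | m xs. part 0 1 m xs}"
  have Sne: "S \<noteq> {}" using part_one[of 0 1] unfolding S_def by auto
  have Sbdd: "bdd_above S" using bnd unfolding S_def bdd_above_def by auto
  define W where "W = Sup S"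
  have "W - \<epsilon>/2 < Sup S" using e W_def by simp
  then obtain m xs where P: "part 0 1 m xs" "W - \<epsilon>/2 < psum \<phi> m xs"
    using less_cSup_iff[OF Sne Sbdd] unfolding S_def by auto
  have m0: "m > 0" using part_pos[OF P(1)] by simp
  have x1: "xs 0 < xs 1" "xs 1 \<le> 1" using part_strict[OF P(1), of 0 1] part_range[OF P(1), of 1] m0 P(1)
    unfolding part_def by auto
  have x0: "xs 0 = 0" using P(1) unfolding part_def by simp
  obtain \<eta>1 where \<eta>1: "\<eta>1 > 0" "\<And>x. x \<in> {0..1} \<Longrightarrow> dist x 0 < \<eta>1 \<Longrightarrow> dist (\<phi> x) (\<phi> 0) < \<epsilon>/2"
  proof -
    have "\<forall>e>0. \<exists>d>0. \<forall>x'\<in>{0..1}. dist x' 0 < d \<longrightarrow> dist (\<phi> x') (\<phi> 0) < e"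
      using cont unfolding continuous_on_iff by (meson atLeastAtMost_iff order_refl zero_le_one)
    then obtain d where "d > 0" "\<forall>x'\<in>{0..1}. dist x' 0 < d \<longrightarrow> dist (\<phi> x') (\<phi> 0) < \<epsilon>/2"
      using e half_gt_zero by blast
    then show ?thesis using that by blast
  qed
  define \<eta> where "\<eta> = min (xs 1) (\<eta>1/2)"
  have \<eta>pos: "\<eta> > 0" "\<eta> \<le> 1" "\<eta> \<le> xs 1" using x1 x0 \<eta>1 unfolding \<eta>_def by auto
  have \<phi>\<eta>: "\<bar>\<phi> \<eta> - \<phi> 0\<bar> < \<epsilon>/2" using \<eta>1(2)[of \<eta>] \<eta>pos \<eta>1 unfolding \<eta>_def dist_real_def by auto
  have xsge: "xs i \<ge> \<eta>" if "1 \<le> i" "i \<le> m" for i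
    using part_mono[OF P(1), of 1 i] that \<eta>pos by auto
  define a' where "a' = (\<lambda>i. max \<eta> (xs i))"
  define b' where "b' = (\<lambda>i. max \<eta> (xs (Suc i)))"
  have famP: "fam \<eta> 1 {..<m} a' b'"
    unfolding a'_def b'_def
    by (rule fam_map[OF fam_part(1)[OF P(1)]]) (use \<eta>pos in auto)
  have fsP: "fs \<phi> {..<m} a' b' \<ge> psum \<phi> m xs - \<bar>\<phi> \<eta> - \<phi> 0\<bar>"
  proof -
    have "psum \<phi> m xs - fs \<phi> {..<m} a' b' = (\<Sum>i<m. \<bar>\<phi> (xs (Suc i)) - \<phi> (xs i)\<bar> - \<bar>\<phi> (b' i) - \<phi> (a' i)\<bar>)"
      unfolding psum_def fs_def by (simp add: sum_subtractf)
    also have "\<dots> \<le> (\<Sum>i<m. if i = 0 then \<bar>\<phi> \<eta> - \<phi> 0\<bar> else 0)"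
    proof (rule sum_mono)
      fix i assume i: "i \<in> {..<m}"
      have b'i: "b' i = xs (Suc i)" using xsge[of "Suc i"] i unfolding b'_def by auto
      show "\<bar>\<phi> (xs (Suc i)) - \<phi> (xs i)\<bar> - \<bar>\<phi> (b' i) - \<phi> (a' i)\<bar> \<le> (if i = 0 then \<bar>\<phi> \<eta> - \<phi> 0\<bar> else 0)"
      proof (cases "i = 0")
        case True
        then have "a' i = \<eta>" using x0 \<eta>pos unfolding a'_def by auto
        then show ?thesis using True b'i x0 by auto
      next
        case False
        then have "a' i = xs i" using xsge[of i] i unfolding a'_def by auto
        then show ?thesis using False b'i by auto
      qed
    qed
    also have "\<dots> = \<bar>\<phi> \<eta> - \<phi> 0\<bar>" using m0 by (simp add: sum.delta)
    finally show ?thesis by simp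
  qed
  show ?thesis
  proof (intro exI[of _ \<eta>] conjI allI impI \<eta>pos)
    fix J :: "'j set" and c d assume Q: "fam 0 \<eta> J c d"
    have U: "fam 0 1 (Inl ` J \<union> Inr ` {..<m}) (case_sum c a') (case_sum d b')"
      "fs \<phi> (Inl ` J \<union> Inr ` {..<m}) (case_sum c a') (case_sum d b') = fs \<phi> J c d + fs \<phi> {..<m} a' b'"
      using fam_union[OF Q famP] \<eta>pos by auto
    obtain m2 xs2 where "part 0 1 m2 xs2" "fs \<phi> (Inl ` J \<union> Inr ` {..<m}) (case_sum c a') (case_sum d b') \<le> psum \<phi> m2 xs2"
      using FP[OF zero_less_one U(1)] by blast
    moreover have "psum \<phi> m2 xs2 \<le> W" unfolding W_def
      using cSup_upper[OF _ Sbdd] \<open>part 0 1 m2 xs2\<close> unfolding S_def by blast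
    ultimately show "fs \<phi> J c d < \<epsilon>" using U(2) fsP P(2) \<phi>\<eta> by linarith
  qed
qed

lemma right_end:
  fixes \<phi> :: "real \<Rightarrow> real"
  assumes cont: "continuous_on {0..1} \<phi>" and bnd: "\<And>m xs. part 0 1 m xs \<Longrightarrow> psum \<phi> m xs \<le> B"
    and e: "\<epsilon> > 0"
  shows "\<exists>\<eta>>0. \<eta> \<le> 1 \<and> (\<forall>(J::'j set) c d. fam (1 - \<eta>) 1 J c d \<longrightarrow> fs \<phi> J c d < \<epsilon>)"
proof -
  define \<psi> where "\<psi> = (\<lambda>x. \<phi> (1 - x))"
  have c2: "continuous_on {0..1} \<psi>" unfolding \<psi>_def
    by (rule continuous_on_compose2[OF cont]) (auto intro!: continuous_intros)
  have b2: "psum \<psi> m xs \<le> B" if "part 0 1 m xs" for m xs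
  proof -
    have "psum \<psi> m xs = psum (\<lambda>x. \<psi> (1 - x)) m (\<lambda>i. 1 - xs (m - i))"
      using part_refl(2)[OF that, of \<psi>] by simp
    also have "\<dots> = psum \<phi> m (\<lambda>i. 1 - xs (m - i))" unfolding \<psi>_def by simp
    also have "\<dots> \<le> B" using bnd part_refl(1)[OF that] by blast
    finally show ?thesis .
  qed
  obtain \<eta> where \<eta>: "\<eta> > 0" "\<eta> \<le> 1" "\<And>(J::'j set) c d. fam 0 \<eta> J c d \<Longrightarrow> fs \<psi> J c d < \<epsilon>"
    using left_end[OF c2 b2 e] by blast
  show ?thesis
  proof (intro exI[of _ \<eta>] conjI allI impI \<eta>(1,2))
    fix J :: "'j set" and c d assume Q: "fam (1 - \<eta>) 1 J c d"
    have "fam 0 \<eta> J (\<lambda>j. 1 - d j) (\<lambda>j. 1 - c j)"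
      unfolding fam_def
    proof (intro conjI ballI impI)
      show "finite J" using Q unfolding fam_def by auto
      fix i assume i: "i \<in> J"
      then show "0 \<le> 1 - d i" "1 - d i \<le> 1 - c i" "1 - c i \<le> \<eta>" using Q unfolding fam_def by auto
      fix j assume "j \<in> J" "i \<noteq> j"
      then have "d i \<le> c j \<or> d j \<le> c i" using i Q unfolding fam_def by auto
      then show "1 - c i \<le> 1 - d j \<or> 1 - c j \<le> 1 - d i" by auto
    qed
    then have "fs \<psi> J (\<lambda>j. 1 - d j) (\<lambda>j. 1 - c j) < \<epsilon>" by (rule \<eta>(3))
    moreover have "fs \<psi> J (\<lambda>j. 1 - d j) (\<lambda>j. 1 - c j) = fs \<phi> J c d"
      unfolding fs_def \<psi>_def by (simp add: abs_minus_commute)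
    ultimately show "fs \<phi> J c d < \<epsilon>" by simp
  qed
qed

definition bet :: "real \<Rightarrow> real" where "bet x = (1 - cos (2*pi*x))/2"
definition hh :: "real \<Rightarrow> real \<Rightarrow> real" where "hh t x = x + t * bet x"
definition hder :: "real \<Rightarrow> real \<Rightarrow> real" where "hder t x = 1 + t * pi * sin (2*pi*x)"

lemma cos_lip: "\<bar>cos (w::real) - cos z\<bar> \<le> \<bar>w - z\<bar>"
proof -
  have "\<bar>cos w - cos z\<bar> = 2 * \<bar>sin ((w + z) / 2)\<bar> * \<bar>sin ((z - w) / 2)\<bar>"
    by (simp add: cos_diff_cos abs_mult)
  also have "\<dots> \<le> 2 * 1 * \<bar>(z - w) / 2\<bar>"
    by (intro mult_mono abs_sin_x_le_abs_x) auto
  finally show ?thesis by simp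
qed

lemma sin_lip: "\<bar>sin (w::real) - sin z\<bar> \<le> \<bar>w - z\<bar>"
proof -
  have "\<bar>sin w - sin z\<bar> = 2 * \<bar>sin ((w - z) / 2)\<bar> * \<bar>cos ((w + z) / 2)\<bar>"
    by (simp add: sin_diff_sin abs_mult)
  also have "\<dots> \<le> 2 * \<bar>(w - z) / 2\<bar> * 1"
    by (intro mult_mono abs_sin_x_le_abs_x) auto
  finally show ?thesis by simp
qed

lemma bet_sin: "bet x = sin (pi * x) ^ 2"
  using cos_double_sin[of "pi * x"] unfolding bet_def by (simp add: mult.assoc)

lemma bet_range: "0 \<le> bet x" "bet x \<le> 1"
  unfolding bet_def by auto

lemma bet_lip: "\<bar>bet x - bet y\<bar> \<le> pi * \<bar>x - y\<bar>"
proof -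
  have "bet x - bet y = (cos (2*pi*y) - cos (2*pi*x)) / 2" unfolding bet_def by (simp add: field_simps)
  then have "\<bar>bet x - bet y\<bar> = \<bar>cos (2*pi*y) - cos (2*pi*x)\<bar> / 2" by (simp only: abs_divide)
  also have "\<dots> \<le> \<bar>2*pi*y - 2*pi*x\<bar> / 2" using cos_lip by (simp add: divide_right_mono)
  also have "\<dots> = pi * \<bar>x - y\<bar>" by (simp add: abs_mult abs_minus_commute right_diff_distrib[symmetric])
  finally show ?thesis .
qed

lemma bet_le: assumes "x \<in> {0..1}" shows "bet x \<le> pi * (1 - x)"
proof -
  have s0: "0 \<le> sin (pi * x)" using assms by (intro sin_ge_zero) auto
  have "sin (pi * x) = sin (pi * (1 - x))"
    by (metis sin_pi_minus right_diff_distrib mult.right_neutral)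
  also have "\<dots> \<le> pi * (1 - x)" using assms by (intro sin_x_le_x) auto
  finally have "sin (pi * x) \<le> pi * (1 - x)" .
  moreover have "sin (pi * x) ^ 2 \<le> sin (pi * x)"
    using s0 sin_le_one[of "pi*x"] by (simp add: power2_eq_square mult_left_le)
  ultimately show ?thesis by (simp add: bet_sin)
qed

lemma bet_pos: assumes "0 < x" "x < 1" shows "bet x > 0"
proof -
  have "sin (pi * x) > 0" using assms by (intro sin_gt_zero) auto
  then show ?thesis by (simp add: bet_sin)
qed

lemma bet_01: "bet 0 = 0" "bet 1 = 0" unfolding bet_def by auto

lemma hh_0: "hh 0 x = x" "hh t 0 = 0" "hh t 1 = 1" by (auto simp: hh_def bet_01)

lemma hh_range: assumes "0 \<le> t" "t \<le> 1/pi" "x \<in> {0..1}" shows "hh t x \<in> {0..1}"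
proof -
  have "t * bet x \<le> t * (pi * (1 - x))" using bet_le[OF assms(3)] assms(1) by (rule mult_left_mono)
  also have "\<dots> = (t * pi) * (1 - x)" by simp
  also have "\<dots> \<le> 1 * (1 - x)" using assms by (intro mult_right_mono) (auto simp: field_simps)
  finally show ?thesis using assms bet_range[of x] unfolding hh_def by auto
qed

lemma hh_lip: assumes "0 \<le> t" shows "\<bar>hh t x - hh t y\<bar> \<le> (1 + t * pi) * \<bar>x - y\<bar>"
proof -
  have "\<bar>hh t x - hh t y\<bar> \<le> \<bar>x - y\<bar> + t * \<bar>bet x - bet y\<bar>"
  proof -
    have "hh t x - hh t y = (x - y) + t * (bet x - bet y)" unfolding hh_def by (simp add: algebra_simps)
    then have "\<bar>hh t x - hh t y\<bar> \<le> \<bar>x - y\<bar> + \<bar>t * (bet x - bet y)\<bar>" by simp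
    then show ?thesis using assms by (simp add: abs_mult)
  qed
  also have "\<dots> \<le> \<bar>x - y\<bar> + t * (pi * \<bar>x - y\<bar>)" using bet_lip assms by (intro add_left_mono mult_left_mono) auto
  finally show ?thesis by (simp add: algebra_simps)
qed

lemma hh_strict: assumes "0 \<le> t" "t < 1/pi" "x < y" shows "hh t x < hh t y"
proof -
  have tp: "t * pi < 1" using assms(2) pi_gt_zero by (simp add: field_simps)
  have "t * \<bar>bet y - bet x\<bar> \<le> t * (pi * \<bar>y - x\<bar>)" using bet_lip[of y x] assms(1) by (rule mult_left_mono)
  also have "\<dots> = (t * pi) * (y - x)" using assms(3) by simp
  also have "\<dots> < 1 * (y - x)" using tp assms(3) by (intro mult_strict_right_mono) auto
  finally have A: "t * \<bar>bet y - bet x\<bar> < y - x" by simp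
  have "t * (- \<bar>bet y - bet x\<bar>) \<le> t * (bet y - bet x)" using assms(1) by (intro mult_left_mono) auto
  then have B: "- (t * \<bar>bet y - bet x\<bar>) \<le> t * (bet y - bet x)" by simp
  have "hh t y - hh t x = (y - x) + t * (bet y - bet x)" unfolding hh_def by (simp add: algebra_simps)
  then show ?thesis using A B by linarith
qed

lemma hh_deriv: "(hh t has_real_derivative hder t x) (at x within S)"
  unfolding hh_def bet_def hder_def
  by (auto intro!: derivative_eq_intros simp: algebra_simps)

lemma hh_cont: "continuous_on S (\<lambda>t. hh t x)" unfolding hh_def by (auto intro!: continuous_intros)

lemma quot_lip:
  fixes Ax Ay Bx By d b0 L1 L2 L3 :: real
  assumes "b0 > 0" "Bx \<ge> b0" "By \<ge> b0" "\<bar>Ax - Ay\<bar> \<le> L1 * d" "\<bar>Ay\<bar> \<le> L2" "\<bar>Bx - By\<bar> \<le> L3 * d"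
  shows "\<bar>Ax/Bx - Ay/By\<bar> \<le> (L1/b0 + L2*L3/b0^2) * d"
proof -
  have bx: "Bx > 0" "By > 0" using assms by auto
  have eq: "Ax/Bx - Ay/By = (Ax - Ay)/Bx + Ay*(By - Bx)/(Bx*By)" using bx by (simp add: field_simps)
  have n1: "L1 * d \<ge> 0" using assms(4) by linarith
  have n3: "L3 * d \<ge> 0" using assms(6) by linarith
  have "\<bar>(Ax - Ay)/Bx\<bar> = \<bar>Ax - Ay\<bar>/Bx" using bx by (simp add: abs_divide)
  also have "\<dots> \<le> (L1 * d)/Bx" using assms(4) bx by (intro divide_right_mono) auto
  also have "\<dots> \<le> (L1 * d)/b0" using n1 assms(1,2) by (intro divide_left_mono) auto
  finally have 1: "\<bar>(Ax - Ay)/Bx\<bar> \<le> L1 * d / b0" .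
  have "\<bar>Ay*(By - Bx)/(Bx*By)\<bar> = \<bar>Ay\<bar> * \<bar>Bx - By\<bar> / (Bx*By)" using bx by (simp add: abs_divide abs_mult abs_minus_commute)
  also have "\<dots> \<le> L2 * (L3 * d) / (Bx * By)"
  proof -
    have "\<bar>Ay\<bar> * \<bar>Bx - By\<bar> \<le> L2 * (L3 * d)" by (rule mult_mono) (use assms in auto)
    then show ?thesis using bx by (intro divide_right_mono) auto
  qed
  also have "\<dots> \<le> L2 * (L3 * d) / (b0 * b0)"
  proof (rule divide_left_mono)
    show "0 \<le> L2 * (L3 * d)" using n3 assms(5) by (metis abs_ge_zero order_trans mult_nonneg_nonneg)
    show "b0 * b0 \<le> Bx * By" using assms by (intro mult_mono) auto
    show "0 < Bx * By * (b0 * b0)" using bx assms(1) by simp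
  qed
  finally have 2: "\<bar>Ay*(By - Bx)/(Bx*By)\<bar> \<le> L2 * (L3 * d) / (b0 * b0)" .
  have "\<bar>Ax/Bx - Ay/By\<bar> \<le> L1 * d / b0 + L2 * (L3 * d) / (b0 * b0)" unfolding eq using 1 2 by linarith
  also have "\<dots> = (L1/b0 + L2*L3/b0^2) * d" by (simp add: field_simps power2_eq_square)
  finally show ?thesis .
qed

lemma A_lip:
  fixes \<Phi> :: "real \<Rightarrow> real"
  assumes T: "T > 0" "T \<le> 1/pi" and Tpi: "T * pi \<le> 1" and Mp: "Mp > 0"
   and \<Phi>lip: "\<And>p q. p \<in> {0..1} \<Longrightarrow> q \<in> {0..1} \<Longrightarrow> \<bar>\<Phi> p - \<Phi> q\<bar> \<le> Mp * \<bar>p - q\<bar>"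
   and x01: "x \<in> {0..1}" "y \<in> {0..1}"
  shows "\<bar>(\<Phi> (hh T x) - \<Phi> x) - (\<Phi> (hh T y) - \<Phi> y)\<bar> \<le> (3 * Mp) * \<bar>x - y\<bar>"
proof -
    have hx: "hh T x \<in> {0..1}" "hh T y \<in> {0..1}" using hh_range T x01 by auto
    have l1: "\<bar>\<Phi> (hh T x) - \<Phi> (hh T y)\<bar> \<le> Mp * \<bar>hh T x - hh T y\<bar>" using \<Phi>lip[OF hx] .
    have l2: "\<bar>\<Phi> x - \<Phi> y\<bar> \<le> Mp * \<bar>x - y\<bar>" using \<Phi>lip[OF x01] .
    have "\<bar>hh T x - hh T y\<bar> \<le> (1 + T * pi) * \<bar>x - y\<bar>" using T(1) by (intro hh_lip) simp
    also have "\<dots> \<le> 2 * \<bar>x - y\<bar>" using Tpi by (intro mult_right_mono) auto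
    finally have l3: "\<bar>hh T x - hh T y\<bar> \<le> 2 * \<bar>x - y\<bar>" .
    have l4: "Mp * \<bar>hh T x - hh T y\<bar> \<le> Mp * (2 * \<bar>x - y\<bar>)" using l3 Mp(1) by (intro mult_left_mono) auto
    show ?thesis
      using l1 l2 l4 by (simp add: abs_le_iff algebra_simps)
qed

lemma rho_lip:
  fixes \<Phi> :: "real \<Rightarrow> real"
  assumes T: "T > 0" "T \<le> 1/pi" and Tpi: "T * pi \<le> 1" and Mp: "Mp > 0" and c: "c > 0"
   and \<Phi>lip: "\<And>p q. p \<in> {0..1} \<Longrightarrow> q \<in> {0..1} \<Longrightarrow> \<bar>\<Phi> p - \<Phi> q\<bar> \<le> Mp * \<bar>p - q\<bar>"
   and x01: "x \<in> {0..1}" "y \<in> {0..1}" and cx: "bet x \<ge> c" "bet y \<ge> c"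
  shows "\<bar>(\<Phi> (hh T x) - \<Phi> x) / (T * bet x) - (\<Phi> (hh T y) - \<Phi> y) / (T * bet y)\<bar>
     \<le> (3 * Mp / (T * c) + Mp * T * (T * pi) / (T * c)^2) * \<bar>x - y\<bar>"
proof -
    have hx: "hh T x \<in> {0..1}" "hh T y \<in> {0..1}" using hh_range T x01 by auto
    have A: "\<bar>(\<Phi> (hh T x) - \<Phi> x) - (\<Phi> (hh T y) - \<Phi> y)\<bar> \<le> (3 * Mp) * \<bar>x - y\<bar>"
      by (rule A_lip[OF T Tpi Mp \<Phi>lip x01])
    have l5: "\<bar>\<Phi> (hh T y) - \<Phi> y\<bar> \<le> Mp * \<bar>hh T y - y\<bar>" using \<Phi>lip hx(2) x01(2) by blast
    have "hh T y - y = T * bet y" unfolding hh_def by simp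
    then have l6: "\<bar>hh T y - y\<bar> \<le> T" using T(1) bet_range[of y]
      by (simp add: abs_mult mult_left_le)
    have B: "\<bar>\<Phi> (hh T y) - \<Phi> y\<bar> \<le> Mp * T"
      using l5 mult_left_mono[OF l6, of Mp] Mp(1) by linarith
    have "T * bet x - T * bet y = T * (bet x - bet y)" by (simp add: algebra_simps)
    then have "\<bar>T * bet x - T * bet y\<bar> = T * \<bar>bet x - bet y\<bar>" using T(1) by (simp add: abs_mult)
    also have "\<dots> \<le> T * (pi * \<bar>x - y\<bar>)" using T(1) bet_lip[of x y] by (intro mult_left_mono) auto
    finally have C: "\<bar>T * bet x - T * bet y\<bar> \<le> (T * pi) * \<bar>x - y\<bar>" by simp
    have Dx: "T * bet x \<ge> T * c" "T * bet y \<ge> T * c" using cx T(1) by auto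
    have Tc: "T * c > 0" using T(1) c by simp
    show ?thesis by (rule quot_lip[OF Tc Dx A B C])
qed

lemma middle:
  fixes \<phi> :: "real \<Rightarrow> real"
  assumes cont: "continuous_on {0..1} \<phi>"
    and H: "\<And>\<epsilon>. \<epsilon> > 0 \<Longrightarrow> \<exists>T>0. T \<le> 1/pi \<and> (\<forall>t m xs. 0 < t \<and> t \<le> T \<and> part 0 1 m xs \<longrightarrow> psum (\<lambda>x. \<phi> x - \<phi> (hh t x)) m xs \<le> \<epsilon>)"
    and eta: "0 < \<eta>" "\<eta> \<le> 1 - \<eta>"
    and e: "\<epsilon> > 0"
  shows "\<exists>\<delta>>0. \<forall>(I::nat set) a b. fam \<eta> (1-\<eta>) I a b \<longrightarrow> (\<Sum>i\<in>I. b i - a i) < \<delta> \<longrightarrow> fs \<phi> I a b \<le> \<epsilon>"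
proof -
  obtain T where T: "T > 0" "T \<le> 1/pi" and T3:
    "\<And>t m xs. 0 < t \<Longrightarrow> t \<le> T \<Longrightarrow> part 0 1 m xs \<Longrightarrow> psum (\<lambda>x. \<phi> x - \<phi> (hh t x)) m xs \<le> \<epsilon>/2"
    using H[of "\<epsilon>/2"] e by auto
  have Tpi: "T * pi \<le> 1" using T pi_gt_zero by (simp add: field_simps)
  obtain Mp where Mp: "Mp > 0" "\<And>x. x \<in> {0..1} \<Longrightarrow> \<bar>\<phi> x\<bar> \<le> Mp"
  proof -
    have "bounded (\<phi> ` {0..1})" by (rule compact_imp_bounded[OF compact_continuous_image[OF cont compact_Icc]])
    then obtain B where "\<forall>y\<in>\<phi>`{0..1}. norm y \<le> B" unfolding bounded_iff by auto
    then have "\<And>x. x \<in> {0..1} \<Longrightarrow> \<bar>\<phi> x\<bar> \<le> max B 1"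
      by (metis image_eqI max.coboundedI1 real_norm_def)
    then show ?thesis using that[of "max B 1"] by simp
  qed
  define \<Phi> where "\<Phi> = (\<lambda>y. integral {0..y} \<phi>)"
  have \<Phi>d: "(\<Phi> has_real_derivative \<phi> y) (at y within {0..1})" if "y \<in> {0..1}" for y
    unfolding \<Phi>_def by (rule integral_has_real_derivative[OF cont that])
  have gen: "\<bar>\<Phi> p - \<Phi> q\<bar> \<le> Mp * (p - q)" if pq: "p \<in> {0..1}" "q \<in> {0..1}" "q \<le> p" for p q
  proof -
    have int: "\<phi> integrable_on {0..p}" using pq by (intro integrable_continuous_real continuous_on_subset[OF cont]) auto
    have "\<Phi> p = \<Phi> q + integral {q..p} \<phi>" unfolding \<Phi>_def using Henstock_Kurzweil_Integration.integral_combine[of 0 q p \<phi>] int pq by auto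
    moreover have "norm (integral {q..p} \<phi>) \<le> integral {q..p} (\<lambda>x. Mp)"
    proof (rule Henstock_Kurzweil_Integration.integral_norm_bound_integral)
      show "\<phi> integrable_on {q..p}" using integrable_on_subinterval[OF int] pq by auto
      show "(\<lambda>x. Mp) integrable_on {q..p}" by (rule integrable_const_ivl)
      fix x assume "x \<in> {q..p}" then show "norm (\<phi> x) \<le> Mp" using Mp pq by auto
    qed
    moreover have "integral {q..p} (\<lambda>x. Mp) = Mp * (p - q)" using pq by simp
    ultimately show ?thesis using pq by (simp add: mult.commute)
  qed
  have \<Phi>lip: "\<bar>\<Phi> p - \<Phi> q\<bar> \<le> Mp * \<bar>p - q\<bar>" if "p \<in> {0..1}" "q \<in> {0..1}" for p q
  proof (cases "q \<le> p")
    case True then show ?thesis using gen[OF that True] by simp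
  next
    case False then show ?thesis using gen[of q p] that by (simp add: abs_minus_commute)
  qed
  have avg: "((\<lambda>t. \<phi> (hh t x)) has_integral (\<Phi> (hh T x) - \<Phi> x) / bet x) {0..T}"
    if x: "x \<in> {0..1}" "bet x > 0" for x
  proof -
    define s where "s = bet x"
    have hr: "x + t * s \<in> {0..1}" if "t \<in> {0..T}" for t
      using hh_range[of t x] that T x unfolding hh_def s_def by auto
    have der: "((\<lambda>t. \<Phi> (x + t * s) / s) has_vector_derivative \<phi> (x + t * s)) (at t within {0..T})"
      if t: "t \<in> {0..T}" for t
    proof -
      have d1: "((\<lambda>t. x + t * s) has_real_derivative s) (at t within {0..T})"
        by (auto intro!: derivative_eq_intros)
      have d2: "(\<Phi> has_real_derivative (\<phi> (x + t * s))) (at (x + t * s) within ((\<lambda>t. x + t * s) ` {0..T}))"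
        by (rule has_field_derivative_subset[OF \<Phi>d[OF hr[OF t]]]) (use hr in auto)
      have "((\<Phi> \<circ> (\<lambda>t. x + t * s)) has_real_derivative (\<phi> (x + t * s) * s)) (at t within {0..T})"
        by (rule DERIV_image_chain[OF d2 d1])
      then have "((\<lambda>t. \<Phi> (x + t * s) / s) has_real_derivative (\<phi> (x + t * s) * s / s)) (at t within {0..T})"
        using DERIV_cdivide[of "\<lambda>t. \<Phi> (x + t * s)" "\<phi> (x + t * s) * s" t "{0..T}" s] by (simp add: o_def)
      then show ?thesis using x(2) unfolding s_def by (simp add: has_real_derivative_iff_has_vector_derivative)
    qed
    have "((\<lambda>t. \<phi> (x + t * s)) has_integral (\<Phi> (x + T * s)/s - \<Phi> (x + 0 * s)/s)) {0..T}"
      using fundamental_theorem_of_calculus[OF _ der] T by auto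
    then show ?thesis unfolding hh_def s_def by (simp add: diff_divide_distrib)
  qed
  obtain c where c: "c > 0" "\<And>x. x \<in> {\<eta>..1-\<eta>} \<Longrightarrow> bet x \<ge> c"
  proof -
    have "continuous_on {\<eta>..1-\<eta>} bet" unfolding bet_def by (auto intro!: continuous_intros)
    moreover have "{\<eta>..1-\<eta>} \<noteq> {}" using eta by auto
    ultimately obtain x0 where x0: "x0 \<in> {\<eta>..1-\<eta>}" "\<forall>y\<in>{\<eta>..1-\<eta>}. bet x0 \<le> bet y"
      using continuous_attains_inf[OF compact_Icc] by blast
    moreover have "bet x0 > 0" using bet_pos[of x0] x0 eta by auto
    ultimately show ?thesis using that by blast
  qed
  define \<rho> where "\<rho> x = (\<Phi> (hh T x) - \<Phi> x) / (T * bet x)" for x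
  define K where "K = 3 * Mp / (T * c) + Mp * T * (T * pi) / (T * c)^2"
  have K0: "K \<ge> 0" unfolding K_def using Mp T c pi_gt_zero
    by (intro add_nonneg_nonneg divide_nonneg_nonneg mult_nonneg_nonneg) auto
  have mid01: "x \<in> {0..1}" if "x \<in> {\<eta>..1-\<eta>}" for x using that eta by auto
  have \<rho>lip: "\<bar>\<rho> x - \<rho> y\<bar> \<le> K * \<bar>x - y\<bar>" if xy: "x \<in> {\<eta>..1-\<eta>}" "y \<in> {\<eta>..1-\<eta>}" for x y
    unfolding \<rho>_def K_def using c(2)[OF xy(1)] c(2)[OF xy(2)] mid01[OF xy(1)] mid01[OF xy(2)]
    by (intro rho_lip[OF T Tpi Mp(1) c(1) \<Phi>lip]) auto
  define chh where "chh t x = \<phi> x - \<phi> (hh t x)" for t x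
  have chhcont: "continuous_on {0..T} (\<lambda>t. chh t x)" if "x \<in> {0..1}" for x
  proof -
    have "continuous_on {0..T} (\<lambda>t. \<phi> (hh t x))"
      by (rule continuous_on_compose2[OF cont hh_cont]) (use hh_range T that in auto)
    then show ?thesis unfolding chh_def by (auto intro!: continuous_intros)
  qed
  have rrep: "\<phi> x - \<rho> x = integral {0..T} (\<lambda>t. chh t x) / T" if xm: "x \<in> {\<eta>..1-\<eta>}" for x
  proof -
    have x01: "x \<in> {0..1}" by (rule mid01[OF xm])
    have bx: "bet x > 0" using c(2)[OF xm] c(1) by linarith
    have i0: "((\<lambda>t. \<phi> x) has_integral (T * \<phi> x)) {0..T}"
      using has_integral_const_real[of "\<phi> x" 0 T] T(1) by simp
    have "((\<lambda>t. chh t x) has_integral (T * \<phi> x - (\<Phi> (hh T x) - \<Phi> x) / bet x)) {0..T}"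
      unfolding chh_def by (rule has_integral_diff[OF i0 avg[OF x01 bx]])
    then have "integral {0..T} (\<lambda>t. chh t x) = T * \<phi> x - (\<Phi> (hh T x) - \<Phi> x) / bet x"
      by (rule integral_unique)
    then have "integral {0..T} (\<lambda>t. chh t x) / T = \<phi> x - (\<Phi> (hh T x) - \<Phi> x) / bet x / T"
      using T(1) by (simp add: diff_divide_distrib)
    also have "(\<Phi> (hh T x) - \<Phi> x) / bet x / T = \<rho> x" unfolding \<rho>_def by (simp add: mult.commute)
    finally show ?thesis by simp
  qed
  have fsb: "fs (chh t) I a b \<le> \<epsilon>/2" if t: "t \<in> {0..T}" and F: "fam 0 1 I a b" for t and I :: "nat set" and a b
  proof (cases "t = 0")
    case True
    then show ?thesis using e unfolding fs_def chh_def by (simp add: hh_0)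
  next
    case False
    then have t': "0 < t" "t \<le> T" using t by auto
    have "\<And>m xs. part 0 1 m xs \<Longrightarrow> psum (chh t) m xs \<le> \<epsilon>/2"
      unfolding chh_def using T3[OF t'] by blast
    then show ?thesis by (rule fs_le_bound[OF _ F])
  qed
  define \<delta> where "\<delta> = \<epsilon> / (2*K + 2)"
  have \<delta>: "\<delta> > 0" "K * \<delta> \<le> \<epsilon>/2" unfolding \<delta>_def using K0 e by (auto simp: field_simps)
  show ?thesis
  proof (intro exI[of _ \<delta>] conjI allI impI \<delta>(1))
    fix I :: "nat set" and a b
    assume F: "fam \<eta> (1-\<eta>) I a b" and L: "(\<Sum>i\<in>I. b i - a i) < \<delta>"
    have F01: "fam 0 1 I a b" using fam_sub[OF F] eta by auto
    have fin: "finite I" using F unfolding fam_def by auto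
    have pts: "a i \<in> {\<eta>..1-\<eta>}" "b i \<in> {\<eta>..1-\<eta>}" "a i \<le> b i" if "i \<in> I" for i
      using F that unfolding fam_def by auto
    have pts01: "a i \<in> {0..1}" "b i \<in> {0..1}" if "i \<in> I" for i
      using F01 that unfolding fam_def by auto
    have "fs \<phi> I a b \<le> fs \<rho> I a b + fs (\<lambda>x. \<phi> x - \<rho> x) I a b"
      unfolding fs_def sum.distrib[symmetric] by (rule sum_mono) linarith
    also have "fs \<rho> I a b \<le> \<epsilon>/2"
    proof -
      have "fs \<rho> I a b \<le> (\<Sum>i\<in>I. K * (b i - a i))"
        unfolding fs_def
      proof (rule sum_mono)
        fix i assume i: "i \<in> I"
        have "\<bar>\<rho> (b i) - \<rho> (a i)\<bar> \<le> K * \<bar>b i - a i\<bar>" using \<rho>lip pts[OF i] by blast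
        then show "\<bar>\<rho> (b i) - \<rho> (a i)\<bar> \<le> K * (b i - a i)" using pts[OF i] by simp
      qed
      also have "\<dots> = K * (\<Sum>i\<in>I. b i - a i)" by (simp add: sum_distrib_left)
      also have "\<dots> \<le> K * \<delta>" using L K0 by (intro mult_left_mono) auto
      finally show ?thesis using \<delta> by simp
    qed
    also have "fs (\<lambda>x. \<phi> x - \<rho> x) I a b \<le> \<epsilon>/2"
    proof -
      define g where "g i t = chh t (b i) - chh t (a i)" for i t
      have gc: "continuous_on {0..T} (g i)" if "i \<in> I" for i
        unfolding g_def by (intro continuous_on_diff chhcont pts01[OF that])
      have gi: "g i integrable_on {0..T}" "(\<lambda>t. \<bar>g i t\<bar>) integrable_on {0..T}" if "i \<in> I" for i
        using gc[OF that] by (auto intro!: integrable_continuous_real continuous_intros)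
      have "fs (\<lambda>x. \<phi> x - \<rho> x) I a b = (\<Sum>i\<in>I. \<bar>integral {0..T} (g i)\<bar> / T)"
        unfolding fs_def
      proof (rule sum.cong[OF refl])
        fix i assume i: "i \<in> I"
        have "integral {0..T} (g i) = integral {0..T} (\<lambda>t. chh t (b i)) - integral {0..T} (\<lambda>t. chh t (a i))"
          unfolding g_def
          by (intro Henstock_Kurzweil_Integration.integral_diff integrable_continuous_real chhcont pts01[OF i])
        moreover have "\<phi> (b i) - \<rho> (b i) - (\<phi> (a i) - \<rho> (a i)) =
            integral {0..T} (\<lambda>t. chh t (b i)) / T - integral {0..T} (\<lambda>t. chh t (a i)) / T"
          using rrep[OF pts(2)[OF i]] rrep[OF pts(1)[OF i]] by simp
        ultimately have "\<phi> (b i) - \<rho> (b i) - (\<phi> (a i) - \<rho> (a i)) = integral {0..T} (g i) / T"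
          by (simp add: diff_divide_distrib)
        then show "\<bar>\<phi> (b i) - \<rho> (b i) - (\<phi> (a i) - \<rho> (a i))\<bar> = \<bar>integral {0..T} (g i)\<bar> / T"
          using T(1) by (simp add: abs_divide)
      qed
      also have "\<dots> \<le> (\<Sum>i\<in>I. integral {0..T} (\<lambda>t. \<bar>g i t\<bar>) / T)"
      proof (rule sum_mono)
        fix i assume i: "i \<in> I"
        have "norm (integral {0..T} (g i)) \<le> integral {0..T} (\<lambda>t. \<bar>g i t\<bar>)"
          by (rule Henstock_Kurzweil_Integration.integral_norm_bound_integral) (use gi[OF i] in auto)
        then show "\<bar>integral {0..T} (g i)\<bar> / T \<le> integral {0..T} (\<lambda>t. \<bar>g i t\<bar>) / T"
          using T by (simp add: divide_right_mono)
      qed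
      also have "\<dots> = integral {0..T} (\<lambda>t. \<Sum>i\<in>I. \<bar>g i t\<bar>) / T"
        using Henstock_Kurzweil_Integration.integral_sum[OF fin, of "\<lambda>i t. \<bar>g i t\<bar>" "{0..T}"] gi by (simp add: sum_divide_distrib)
      also have "\<dots> \<le> integral {0..T} (\<lambda>t. \<epsilon>/2) / T"
      proof (intro divide_right_mono Henstock_Kurzweil_Integration.integral_le)
        show "(\<lambda>t. \<Sum>i\<in>I. \<bar>g i t\<bar>) integrable_on {0..T}" using gi fin by (intro integrable_sum) auto
        fix t assume t: "t \<in> {0..T}"
        show "(\<Sum>i\<in>I. \<bar>g i t\<bar>) \<le> \<epsilon>/2" using fsb[OF t F01] unfolding fs_def g_def .
      qed (use T in auto)
      also have "\<dots> = \<epsilon>/2" using T by simp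
      finally show ?thesis .
    qed
    finally show "fs \<phi> I a b \<le> \<epsilon>" by simp
  qed
qed

lemma tele:
  fixes F :: "real \<Rightarrow> real"
  assumes "a \<le> b" "\<eta> \<le> 1 - \<eta>"
  shows "F b - F a = (F (min b \<eta>) - F (min a \<eta>)) + (F (max \<eta> (min b (1-\<eta>))) - F (max \<eta> (min a (1-\<eta>))))
     + (F (max b (1-\<eta>)) - F (max a (1-\<eta>)))"
  using assms unfolding min_def max_def by (smt (verit))

lemma cM_len:
  fixes a b \<eta> :: real
  assumes "a \<le> b"
  shows "max \<eta> (min b (1-\<eta>)) - max \<eta> (min a (1-\<eta>)) \<le> b - a"
  using assms by (auto simp: min_def max_def)

lemma core_ac:
  fixes \<phi> :: "real \<Rightarrow> real"
  assumes cont: "continuous_on {0..1} \<phi>"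
    and bnd: "\<And>m xs. part 0 1 m xs \<Longrightarrow> psum \<phi> m xs \<le> B"
    and H: "\<And>\<epsilon>. \<epsilon> > 0 \<Longrightarrow> \<exists>T>0. T \<le> 1/pi \<and> (\<forall>t m xs. 0 < t \<and> t \<le> T \<and> part 0 1 m xs \<longrightarrow> psum (\<lambda>x. \<phi> x - \<phi> (hh t x)) m xs \<le> \<epsilon>)"
  shows "abs_cont01 \<phi>"
  unfolding abs_cont01_def
proof (intro allI impI)
  fix \<epsilon> :: real assume e: "\<epsilon> > 0"
  have e4: "\<epsilon>/4 > 0" using e by simp
  obtain \<eta>1 where \<eta>1: "\<eta>1 > 0" "\<eta>1 \<le> 1" "\<And>(J::nat set) c d. fam 0 \<eta>1 J c d \<Longrightarrow> fs \<phi> J c d < \<epsilon>/4"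
    using left_end[OF cont bnd e4] by blast
  obtain \<eta>2 where \<eta>2: "\<eta>2 > 0" "\<eta>2 \<le> 1" "\<And>(J::nat set) c d. fam (1 - \<eta>2) 1 J c d \<Longrightarrow> fs \<phi> J c d < \<epsilon>/4"
    using right_end[OF cont bnd e4] by blast
  define \<eta> where "\<eta> = min (min \<eta>1 \<eta>2) (1/4)"
  have \<eta>: "0 < \<eta>" "\<eta> \<le> 1 - \<eta>" "\<eta> \<le> \<eta>1" "\<eta> \<le> \<eta>2" using \<eta>1 \<eta>2 unfolding \<eta>_def by auto
  obtain \<delta> where \<delta>: "\<delta> > 0" "\<And>(I::nat set) a b. fam \<eta> (1-\<eta>) I a b \<Longrightarrow> (\<Sum>i\<in>I. b i - a i) < \<delta> \<Longrightarrow> fs \<phi> I a b \<le> \<epsilon>/4"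
    using middle[OF cont H \<eta>(1,2) e4] by blast
  show "\<exists>\<delta>>0. \<forall>(n::nat) (a::nat \<Rightarrow> real) b.
      (\<forall>i<n. 0 \<le> a i \<and> a i \<le> b i \<and> b i \<le> 1) \<and>
      (\<forall>i<n. \<forall>j<n. i \<noteq> j \<longrightarrow> b i \<le> a j \<or> b j \<le> a i) \<and>
      (\<Sum>i<n. b i - a i) < \<delta> \<longrightarrow> (\<Sum>i<n. \<bar>\<phi> (b i) - \<phi> (a i)\<bar>) < \<epsilon>"
  proof (intro exI[of _ \<delta>] conjI allI impI \<delta>(1))
    fix n :: nat and a b :: "nat \<Rightarrow> real"
    assume A: "(\<forall>i<n. 0 \<le> a i \<and> a i \<le> b i \<and> b i \<le> 1) \<and>
      (\<forall>i<n. \<forall>j<n. i \<noteq> j \<longrightarrow> b i \<le> a j \<or> b j \<le> a i) \<and> (\<Sum>i<n. b i - a i) < \<delta>"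
    have F: "fam 0 1 {..<n} a b" using A unfolding fam_def by auto
    define aL where "aL i = min (a i) \<eta>" for i
    define bL where "bL i = min (b i) \<eta>" for i
    define aM where "aM i = max \<eta> (min (a i) (1-\<eta>))" for i
    define bM where "bM i = max \<eta> (min (b i) (1-\<eta>))" for i
    define aR where "aR i = max (a i) (1-\<eta>)" for i
    define bR where "bR i = max (b i) (1-\<eta>)" for i
    have FL: "fam 0 \<eta> {..<n} aL bL" unfolding aL_def bL_def
      by (rule fam_map[OF F]) (use \<eta> in auto)
    have FM: "fam \<eta> (1-\<eta>) {..<n} aM bM" unfolding aM_def bM_def
      by (rule fam_map[OF F]) (use \<eta> in auto)
    have FR: "fam (1-\<eta>) 1 {..<n} aR bR" unfolding aR_def bR_def
      by (rule fam_map[OF F]) (use \<eta> in auto)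
    have sL: "fs \<phi> {..<n} aL bL < \<epsilon>/4" using \<eta>1(3)[OF fam_sub[OF FL]] \<eta> by auto
    have sR: "fs \<phi> {..<n} aR bR < \<epsilon>/4" using \<eta>2(3)[OF fam_sub[OF FR]] \<eta> by auto
    have "(\<Sum>i<n. bM i - aM i) \<le> (\<Sum>i<n. b i - a i)"
      unfolding aM_def bM_def by (rule sum_mono) (use A cM_len in auto)
    then have sM: "fs \<phi> {..<n} aM bM \<le> \<epsilon>/4" using \<delta>(2)[OF FM] A by auto
    have "(\<Sum>i<n. \<bar>\<phi> (b i) - \<phi> (a i)\<bar>) \<le> fs \<phi> {..<n} aL bL + fs \<phi> {..<n} aM bM + fs \<phi> {..<n} aR bR"
      unfolding fs_def sum.distrib[symmetric]
    proof (rule sum_mono)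
      fix i assume "i \<in> {..<n}"
      then have "a i \<le> b i" using A by auto
      from tele[OF this \<eta>(2), of \<phi>]
      show "\<bar>\<phi> (b i) - \<phi> (a i)\<bar> \<le> \<bar>\<phi> (bL i) - \<phi> (aL i)\<bar> + \<bar>\<phi> (bM i) - \<phi> (aM i)\<bar> + \<bar>\<phi> (bR i) - \<phi> (aR i)\<bar>"
        unfolding aL_def bL_def aM_def bM_def aR_def bR_def by linarith
    qed
    then show "(\<Sum>i<n. \<bar>\<phi> (b i) - \<phi> (a i)\<bar>) < \<epsilon>" using sL sM sR e by linarith
  qed
qed

lemma diff1_deriv:
  assumes "g \<in> Diff1 M"
  shows "\<exists>g'. continuous_on {0..1} g' \<and> (\<forall>x\<in>{0..1}. (g has_real_derivative g' x) (at x within {0..1}) \<and> g' x > 0)"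
proof (cases M)
  case Intv
  then have "g \<in> Diff1 Intv" using assms by simp
  then obtain f' where "continuous_on {0..1} f'"
     "\<forall>x\<in>{0..1}. (g has_real_derivative f' x) (at x within {0..1}) \<and> f' x > 0"
    by (auto simp only: Diff1.simps mem_Collect_eq)
  then show ?thesis by blast
next
  case Circ
  then have "g \<in> Diff1 Circ" using assms by simp
  then obtain F' where F': "continuous_on UNIV F'" "\<forall>x. (g has_real_derivative F' x) (at x) \<and> F' x > 0"
    by (auto simp only: Diff1.simps mem_Collect_eq)
  have "continuous_on {0..1} F'" using continuous_on_subset[OF F'(1)] by blast
  moreover have "\<forall>x\<in>{0..1}. (g has_real_derivative F' x) (at x within {0..1}) \<and> F' x > 0"
    using F'(2) has_field_derivative_at_within by blast
  ultimately show ?thesis by blast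
qed

lemma D_eq:
  assumes "(g has_real_derivative d) (at x within {0..1})" "x \<in> {0..1}"
  shows "D g x = d"
proof -
  have "(g has_vector_derivative d) (at x within cbox 0 1)"
    using assms(1) by (simp add: has_real_derivative_iff_has_vector_derivative cbox_interval)
  then have "vector_derivative g (at x within cbox 0 1) = d"
    using vector_derivative_within_cbox[of 0 1 x g d] assms(2) by (simp add: cbox_interval)
  then show ?thesis unfolding D_def by (simp add: cbox_interval)
qed

lemma D_compM:
  assumes gd: "\<And>y. y \<in> {0..1} \<Longrightarrow> (g has_real_derivative g' y) (at y within {0..1})"
    and hder: "(h has_real_derivative h') (at x within {0..1})" and hr: "h ` {0..1} \<subseteq> {0..1}"
    and x: "x \<in> {0..1}"
  shows "D (compM M g h) x = g' (h x) * h'"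
proof -
  have hx: "h x \<in> {0..1}" using hr x by blast
  have g1: "(g has_real_derivative g' (h x)) (at (h x) within (h ` {0..1}))"
    by (rule has_field_derivative_subset[OF gd[OF hx] hr])
  have c: "((g \<circ> h) has_real_derivative g' (h x) * h') (at x within {0..1})"
    by (rule DERIV_image_chain[OF g1 hder])
  show ?thesis
  proof (cases M)
    case Intv
    then show ?thesis using D_eq[OF c x] by simp
  next
    case Circ
    have "((\<lambda>y. g (h y) - of_int \<lfloor>g (h 0)\<rfloor>) has_real_derivative g' (h x) * h' - 0) (at x within {0..1})"
      using c by (intro DERIV_diff) (auto simp: o_def)
    then show ?thesis using D_eq[of _ _ x] x Circ by simp
  qed
qed

lemma cis_lip: "cmod (cis a - cis b) \<le> \<bar>a - b\<bar>"
proof -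
  have "(cmod (cis a - cis b))^2 = (cos a - cos b)^2 + (sin a - sin b)^2"
    by (simp add: cmod_power2)
  also have "\<dots> = 2 - 2 * (cos a * cos b + sin a * sin b)"
    using sin_cos_squared_add[of a] sin_cos_squared_add[of b] by (simp add: power2_eq_square algebra_simps)
  also have "\<dots> = 2 - 2 * cos (a - b)" by (simp add: cos_diff)
  also have "cos (a - b) = 1 - 2 * (sin ((a - b)/2))^2"
    by (metis cos_double_sin mult_2 field_sum_of_halves)
  also have "2 - 2 * (1 - 2 * (sin ((a - b)/2))^2) = 4 * (sin ((a - b)/2))^2" by simp
  also have "\<dots> \<le> 4 * ((a - b)/2)^2"
  proof -
    have "(sin ((a - b)/2))^2 \<le> ((a - b)/2)^2"
      using abs_sin_x_le_abs_x[of "(a-b)/2"] abs_le_square_iff by blast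
    then show ?thesis by simp
  qed
  also have "\<dots> = \<bar>a - b\<bar>^2" by (simp add: power2_eq_square field_simps)
  finally show ?thesis by (rule power2_le_imp_le) simp
qed

lemma ln_lip_aux:
  fixes p q c :: real
  assumes "c > 0" "q \<ge> c" "q \<le> p"
  shows "\<bar>ln p - ln q\<bar> \<le> (p - q) / c"
proof -
  have q0: "q > 0" "p > 0" using assms by auto
  have "ln (p / q) \<le> p / q - 1" using q0 by (intro ln_le_minus_one) auto
  then have "ln p - ln q \<le> (p - q) / q" using q0 by (simp add: ln_div diff_divide_distrib)
  also have "\<dots> \<le> (p - q) / c" using assms by (intro divide_left_mono) auto
  finally have "ln p - ln q \<le> (p - q) / c" .
  moreover have "ln q \<le> ln p" using q0 assms by simp
  ultimately show ?thesis by simp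
qed

lemma ln_lip:
  fixes p q c :: real
  assumes "c > 0" "p \<ge> c" "q \<ge> c"
  shows "\<bar>ln p - ln q\<bar> \<le> \<bar>p - q\<bar> / c"
proof (cases "q \<le> p")
  case True then show ?thesis using ln_lip_aux[OF assms(1,3) True] by simp
next
  case False then show ?thesis using ln_lip_aux[OF assms(1,2), of q] by (simp add: abs_minus_commute)
qed

lemma exp_side_aux:
  fixes p q Mx :: real
  assumes "q > 0" "q \<le> p" "p \<le> Mx"
  shows "\<bar>p - q\<bar> \<le> Mx * \<bar>ln p - ln q\<bar>"
proof -
  have p0: "p > 0" using assms by auto
  have "ln (q / p) \<le> q / p - 1" using p0 assms by (intro ln_le_minus_one) auto
  then have "ln q - ln p \<le> (q - p) / p" using p0 assms by (simp add: ln_div diff_divide_distrib)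
  then have "p - q \<le> p * (ln p - ln q)" using p0 by (simp add: field_simps)
  also have "\<dots> \<le> Mx * (ln p - ln q)" using assms p0 by (intro mult_right_mono) auto
  finally show ?thesis using assms p0 by simp
qed

lemma exp_side:
  fixes p q Mx :: real
  assumes "p > 0" "q > 0" "p \<le> Mx" "q \<le> Mx"
  shows "\<bar>p - q\<bar> \<le> Mx * \<bar>ln p - ln q\<bar>"
proof (cases "q \<le> p")
  case True then show ?thesis using exp_side_aux[OF assms(2) True assms(3)] by simp
next
  case False then show ?thesis using exp_side_aux[OF assms(1) _ assms(4), of] by (simp add: abs_minus_commute)
qed

lemma ac_transfer:
  assumes "abs_cont01 F" "K > 0" "\<And>x y. x \<in> {0..1} \<Longrightarrow> y \<in> {0..1} \<Longrightarrow> \<bar>G x - G y\<bar> \<le> K * \<bar>F x - F y\<bar>"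
  shows "abs_cont01 G"
  unfolding abs_cont01_def
proof (intro allI impI)
  fix \<epsilon> :: real assume e: "\<epsilon> > 0"
  then obtain \<delta> where \<delta>: "\<delta> > 0" "\<forall>(n::nat) (a::nat \<Rightarrow> real) b.
      (\<forall>i<n. 0 \<le> a i \<and> a i \<le> b i \<and> b i \<le> 1) \<and>
      (\<forall>i<n. \<forall>j<n. i \<noteq> j \<longrightarrow> b i \<le> a j \<or> b j \<le> a i) \<and>
      (\<Sum>i<n. b i - a i) < \<delta> \<longrightarrow> (\<Sum>i<n. \<bar>F (b i) - F (a i)\<bar>) < \<epsilon> / K"
    using assms(1)[unfolded abs_cont01_def, rule_format, of "\<epsilon> / K"] assms(2) e by auto
  show "\<exists>\<delta>>0. \<forall>(n::nat) (a::nat \<Rightarrow> real) b.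
      (\<forall>i<n. 0 \<le> a i \<and> a i \<le> b i \<and> b i \<le> 1) \<and>
      (\<forall>i<n. \<forall>j<n. i \<noteq> j \<longrightarrow> b i \<le> a j \<or> b j \<le> a i) \<and>
      (\<Sum>i<n. b i - a i) < \<delta> \<longrightarrow> (\<Sum>i<n. \<bar>G (b i) - G (a i)\<bar>) < \<epsilon>"
  proof (intro exI[of _ \<delta>] conjI allI impI \<delta>(1))
    fix n :: nat and a b :: "nat \<Rightarrow> real"
    assume A: "(\<forall>i<n. 0 \<le> a i \<and> a i \<le> b i \<and> b i \<le> 1) \<and>
      (\<forall>i<n. \<forall>j<n. i \<noteq> j \<longrightarrow> b i \<le> a j \<or> b j \<le> a i) \<and> (\<Sum>i<n. b i - a i) < \<delta>"
    then have S: "(\<Sum>i<n. \<bar>F (b i) - F (a i)\<bar>) < \<epsilon> / K" using \<delta>(2) by blast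
    have "(\<Sum>i<n. \<bar>G (b i) - G (a i)\<bar>) \<le> (\<Sum>i<n. K * \<bar>F (b i) - F (a i)\<bar>)"
    proof (rule sum_mono)
      fix i assume "i \<in> {..<n}"
      then have "a i \<in> {0..1}" "b i \<in> {0..1}" using A by auto
      then show "\<bar>G (b i) - G (a i)\<bar> \<le> K * \<bar>F (b i) - F (a i)\<bar>" using assms(3) by blast
    qed
    also have "\<dots> = K * (\<Sum>i<n. \<bar>F (b i) - F (a i)\<bar>)" by (simp add: sum_distrib_left)
    also have "\<dots> < K * (\<epsilon> / K)" using S assms(2) by (intro mult_strict_left_mono) auto
    also have "\<dots> = \<epsilon>" using assms(2) by simp
    finally show "(\<Sum>i<n. \<bar>G (b i) - G (a i)\<bar>) < \<epsilon>" .
  qed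
qed

lemma hd_ge: assumes "0 \<le> t" "t \<le> 1/(2*pi)" shows "hder t x \<ge> 1/2"
proof -
  have "t * pi \<le> 1/2" using assms pi_gt_zero by (simp add: field_simps)
  moreover have "\<bar>t * pi * sin (2*pi*x)\<bar> \<le> t * pi"
    using assms(1) by (simp add: abs_mult mult_left_le)
  ultimately show ?thesis unfolding hder_def by linarith
qed

lemma hd_lip: assumes "0 \<le> t" shows "\<bar>hder t x - hder t y\<bar> \<le> (2 * pi^2 * t) * \<bar>x - y\<bar>"
proof -
  have "hder t x - hder t y = (t * pi) * (sin (2*pi*x) - sin (2*pi*y))" unfolding hder_def by (simp add: algebra_simps)
  then have "\<bar>hder t x - hder t y\<bar> = (t * pi) * \<bar>sin (2*pi*x) - sin (2*pi*y)\<bar>" using assms by (simp add: abs_mult)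
  also have "\<dots> \<le> (t * pi) * \<bar>2*pi*x - 2*pi*y\<bar>" using assms by (intro mult_left_mono sin_lip) auto
  also have "\<bar>2*pi*x - 2*pi*y\<bar> = 2*pi*\<bar>x - y\<bar>" by (simp add: abs_mult flip: right_diff_distrib)
  finally show ?thesis by (simp add: power2_eq_square mult_ac)
qed

lemma lnhd_lip: assumes "0 \<le> t" "t \<le> 1/(2*pi)"
  shows "\<bar>ln (hder t x) - ln (hder t y)\<bar> \<le> (4 * pi^2 * t) * \<bar>x - y\<bar>"
proof -
  have "\<bar>ln (hder t x) - ln (hder t y)\<bar> \<le> \<bar>hder t x - hder t y\<bar> / (1/2)"
    by (rule ln_lip) (use hd_ge[OF assms] in auto)
  also have "\<dots> \<le> ((2 * pi^2 * t) * \<bar>x - y\<bar>) / (1/2)" using hd_lip[OF assms(1)] by (intro divide_right_mono) auto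
  finally show ?thesis by simp
qed

lemma bv_of_bound:
  assumes "\<And>m xs. part 0 1 m xs \<Longrightarrow> psum F m xs \<le> L"
  shows "bv01 F" "V01 F \<le> L"
proof -
  have "psum F 1 (\<lambda>i. if i = 0 then 0 else 1) \<in> var_sums F"
    unfolding var_sums_eq using part_one[of "0::real" 1] by (intro CollectI exI conjI refl) auto
  then have ne: "var_sums F \<noteq> {}" by force
  have ub: "y \<le> L" if yv: "y \<in> var_sums F" for y
  proof -
    obtain m xs where "y = psum F m xs" "part 0 1 m xs" using yv unfolding var_sums_eq by force
    then show ?thesis using assms by simp
  qed
  show "bv01 F" unfolding bv01_def bdd_above_def using ub by blast
  show "V01 F \<le> L" unfolding V01_def by (rule cSup_least[OF ne ub])
qed

lemma psum_le_V01: assumes "bv01 F" "part 0 1 m xs" shows "psum F m xs \<le> V01 F"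
  unfolding V01_def
  by (rule cSup_upper) (use assms in \<open>auto simp: var_sums_eq bv01_def\<close>)

lemma hh_image: assumes "0 \<le> t" "t \<le> 1/pi" shows "hh t ` {0..1} \<subseteq> {0..1}"
  using hh_range[OF assms] by blast

lemma hh_diff1: assumes "0 \<le> t" "t \<le> 1/(2*pi)"
  shows "hh t \<in> Diff1BV M" "\<And>x. x \<in> {0..1} \<Longrightarrow> D (hh t) x = hder t x"
proof -
  have pos: "hder t x > 0" for x using hd_ge[OF assms, of x] by linarith
  have cont: "continuous_on S (hder t)" for S unfolding hder_def by (auto intro!: continuous_intros)
  show Dh: "\<And>x. x \<in> {0..1} \<Longrightarrow> D (hh t) x = hder t x" by (rule D_eq[OF hh_deriv])
  have d1: "hh t \<in> Diff1 M"
  proof (cases M)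
    case Intv
    have "continuous_on {0..1} (hder t) \<and> (\<forall>x\<in>{0..1}. (hh t has_real_derivative hder t x) (at x within {0..1}) \<and> hder t x > 0)"
      using cont hh_deriv pos by blast
    then have "hh t \<in> Diff1 Intv" unfolding Diff1.simps mem_Collect_eq using hh_0 by blast
    then show ?thesis using Intv by simp
  next
    case Circ
    have per: "hh t (x + 1) = hh t x + 1" for x
    proof -
      have "cos (2 * pi * (x + 1)) = cos (2 * pi * x + 2 * pi)" by (simp add: algebra_simps)
      then have "bet (x + 1) = bet x" unfolding bet_def by simp
      then show ?thesis unfolding hh_def by simp
    qed
    have "continuous_on UNIV (hder t) \<and> (\<forall>x. (hh t has_real_derivative hder t x) (at x) \<and> hder t x > 0)"
      using cont hh_deriv pos by blast
    moreover have "0 \<le> hh t 0" "hh t 0 < 1" using hh_0 by auto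
    ultimately have "hh t \<in> Diff1 Circ" unfolding Diff1.simps mem_Collect_eq using per by blast
    then show ?thesis using Circ by simp
  qed
  have "\<And>m xs. part 0 1 m xs \<Longrightarrow> psum (D (hh t)) m xs \<le> 2 * pi^2 * t"
  proof -
    fix m xs assume P: "part 0 1 m xs"
    have "psum (D (hh t)) m xs = psum (hder t) m xs" by (rule psum_cong[OF P Dh])
    also have "\<dots> \<le> 2 * pi^2 * t" by (rule psum_lip[OF P hd_lip[OF assms(1)]])
    finally show "psum (D (hh t)) m xs \<le> 2 * pi^2 * t" .
  qed
  then have "bv01 (D (hh t))" by (rule bv_of_bound)
  then show "hh t \<in> Diff1BV M" using d1 unfolding Diff1BV_def by blast
qed

lemma id_diff1: "(\<lambda>x. x) \<in> Diff1BV M" "\<And>x. x \<in> {0..1} \<Longrightarrow> D (\<lambda>x. x) x = 1"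
proof -
  have der: "((\<lambda>x. x) has_real_derivative 1) (at x within S)" for x S by (rule DERIV_ident)
  show Dh: "\<And>x. x \<in> {0..1} \<Longrightarrow> D (\<lambda>x. x) x = 1" by (rule D_eq[OF der])
  have d1: "(\<lambda>x. x) \<in> Diff1 M"
  proof (cases M)
    case Intv
    have "continuous_on {0..1} (\<lambda>x. 1::real) \<and> (\<forall>x\<in>{0..1}. ((\<lambda>x. x) has_real_derivative 1) (at x within {0..1}) \<and> (1::real) > 0)"
      using der by auto
    then have "(\<lambda>x. x) \<in> Diff1 Intv" unfolding Diff1.simps mem_Collect_eq by blast
    then show ?thesis using Intv by simp
  next
    case Circ
    have "continuous_on UNIV (\<lambda>x. 1::real) \<and> (\<forall>x. ((\<lambda>x. x) has_real_derivative 1) (at x) \<and> (1::real) > 0)"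
      using der by auto
    then have "(\<lambda>x. x) \<in> Diff1 Circ" unfolding Diff1.simps mem_Collect_eq
      by (intro conjI allI exI[of _ "\<lambda>x. 1::real"]) auto
    then show ?thesis using Circ by simp
  qed
  have "\<And>m xs. part 0 1 m xs \<Longrightarrow> psum (D (\<lambda>x. x)) m xs \<le> 0"
  proof -
    fix m xs assume P: "part 0 1 m xs"
    have "psum (D (\<lambda>x. x)) m xs = psum (\<lambda>x. 1) m xs" by (rule psum_cong[OF P Dh])
    also have "\<dots> = 0" by (simp add: psum_def)
    finally show "psum (D (\<lambda>x. x)) m xs \<le> 0" by simp
  qed
  then have "bv01 (D (\<lambda>x. x))" by (rule bv_of_bound)
  then show "(\<lambda>x. x) \<in> Diff1BV M" using d1 unfolding Diff1BV_def by blast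
qed

lemma dist_upper:
  assumes t: "0 \<le> t" "t \<le> 1/(2*pi)"
  shows "dDiff M (\<lambda>x. x) (hh t) \<le> (2*pi + 4*pi^2) * t"
proof -
  have tpi: "t \<le> 1/pi" using t pi_gt_zero by (simp add: field_simps)
  have dist1: "distM M x (hh t x) \<le> 2*pi*t" if x: "x \<in> {0..1}" for x
  proof -
    have hx: "hh t x - x = t * bet x" unfolding hh_def by simp
    have tb: "t * bet x \<le> t" using t bet_range[of x] by (simp add: mult_left_le)
    have tb0: "0 \<le> t * bet x" using t bet_range[of x] by simp
    have "1 * t \<le> (2*pi) * t" by (rule mult_right_mono) (use t pi_ge_two in auto)
    then have t2: "t \<le> 2*pi*t" by simp
    show ?thesis
    proof (cases M)
      case Intv
      then have "distM M x (hh t x) = t * bet x" using hx tb0 by simp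
      then show ?thesis using tb t2 by linarith
    next
      case Circ
      then have "distM M x (hh t x) \<le> \<bar>2*pi*x - 2*pi*hh t x\<bar>" using cis_lip by simp
      also have "\<bar>2*pi*x - 2*pi*hh t x\<bar> = 2*pi*(t * bet x)"
        using hx tb0 by (simp add: abs_mult flip: right_diff_distrib)
      also have "\<dots> \<le> 2*pi*t" using tb by (intro mult_left_mono) auto
      finally show ?thesis .
    qed
  qed
  have S: "(SUP x\<in>{0..1}. distM M x (hh t x)) \<le> 2*pi*t"
    by (rule cSUP_least) (use dist1 in auto)
  define Gf where "Gf = (\<lambda>x. ln (D (\<lambda>x. x) x) - ln (D (hh t) x))"
  have Gfe: "Gf x = - ln (hder t x)" if "x \<in> {0..1}" for x
    unfolding Gf_def using id_diff1(2)[OF that] hh_diff1(2)[OF t that] by simp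
  have G0: "Gf 0 = 0" using Gfe[of 0] unfolding hder_def by simp
  have "\<And>m xs. part 0 1 m xs \<Longrightarrow> psum Gf m xs \<le> 4*pi^2*t"
  proof -
    fix m xs assume P: "part 0 1 m xs"
    have "psum Gf m xs = psum (\<lambda>x. - ln (hder t x)) m xs" by (rule psum_cong[OF P Gfe])
    also have "\<dots> \<le> 4*pi^2*t"
    proof (rule psum_lip[OF P])
      fix x y :: real
      show "\<bar>- ln (hder t x) - - ln (hder t y)\<bar> \<le> 4 * pi\<^sup>2 * t * \<bar>x - y\<bar>"
        using lnhd_lip[OF t, of x y] by (simp add: abs_minus_commute)
    qed
    finally show "psum Gf m xs \<le> 4*pi^2*t" .
  qed
  then have V: "V01 Gf \<le> 4*pi^2*t" by (rule bv_of_bound)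
  have "dDiff M (\<lambda>x. x) (hh t) = (SUP x\<in>{0..1}. distM M x (hh t x)) + (\<bar>Gf 0\<bar> + V01 Gf)"
    unfolding dDiff_def BVnorm_def Gf_def by simp
  also have "\<dots> \<le> 2*pi*t + (0 + 4*pi^2*t)" using S V G0 by simp
  finally show ?thesis by (simp add: algebra_simps)
qed

lemma lower:
  assumes gD: "g \<in> Diff1 M"
    and gd: "\<And>y. y \<in> {0..1} \<Longrightarrow> (g has_real_derivative g' y) (at y within {0..1})"
    and gpos: "\<And>y. y \<in> {0..1} \<Longrightarrow> g' y > 0"
    and Bphi: "\<And>m xs. part 0 1 m xs \<Longrightarrow> psum (\<lambda>x. ln (g' x)) m xs \<le> B"
    and t: "0 < t" "t \<le> 1/(2*pi)"
    and P: "part 0 1 m xs"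
  shows "psum (\<lambda>x. ln (g' x) - ln (g' (hh t x))) m xs
     \<le> dDiff M (compM M g (\<lambda>x. x)) (compM M g (hh t)) + 4*pi^2*t"
proof -
  have t0: "0 \<le> t" using t by simp
  have tpi: "t \<le> 1/pi" using t pi_gt_zero by (simp add: field_simps)
  have tpi': "t < 1/pi" using t pi_gt_zero by (simp add: field_simps)
  have hr: "hh t ` {0..1} \<subseteq> {0..1}" by (rule hh_image[OF t0 tpi])
  have idr: "(\<lambda>x. x) ` {0..1} \<subseteq> ({0..1}::real set)" by simp
  have D1: "D (compM M g (\<lambda>x. x)) x = g' x * 1" if "x \<in> {0..1}" for x
    using D_compM[OF gd DERIV_ident idr that] by simp
  have D2: "D (compM M g (hh t)) x = g' (hh t x) * hder t x" if "x \<in> {0..1}" for x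
    by (rule D_compM[OF gd hh_deriv hr that])
  define \<phi> where "\<phi> = (\<lambda>x. ln (g' x))"
  define \<psi> where "\<psi> = (\<lambda>x. ln (D (compM M g (\<lambda>x. x)) x) - ln (D (compM M g (hh t)) x))"
  define \<psi>' where "\<psi>' = (\<lambda>x. \<phi> x - (\<phi> (hh t x) + ln (hder t x)))"
  have hdp: "hder t x > 0" for x using hd_ge[OF t0 t(2), of x] by linarith
  have \<psi>e: "\<psi> x = \<psi>' x" if x: "x \<in> {0..1}" for x
  proof -
    have hx: "hh t x \<in> {0..1}" using hr x by blast
    have "ln (g' (hh t x) * hder t x) = ln (g' (hh t x)) + ln (hder t x)"
      using gpos[OF hx] hdp[of x] by (simp add: ln_mult)
    then show ?thesis unfolding \<psi>_def \<psi>'_def \<phi>_def using D1[OF x] D2[OF x] by simp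
  qed
  have comp: "psum (\<lambda>x. \<phi> (hh t x)) m xs \<le> B" if P': "part 0 1 m xs" for m xs
  proof -
    have "psum (\<lambda>x. \<phi> (hh t x)) m xs = psum \<phi> m (\<lambda>i. hh t (xs i))"
      by (rule part_comp(2)[OF P' hh_0(2) hh_0(3) hh_strict[OF t0 tpi']])
    also have "\<dots> \<le> B" unfolding \<phi>_def
      by (rule Bphi[OF part_comp(1)[OF P' hh_0(2) hh_0(3) hh_strict[OF t0 tpi']]])
    finally show ?thesis .
  qed
  have lnhd: "psum (\<lambda>x. ln (hder t x)) m xs \<le> 4*pi^2*t" if P': "part 0 1 m xs" for m xs
    by (rule psum_lip[OF P' lnhd_lip[OF t0 t(2)]])
  have bnd: "psum \<psi> m xs \<le> B + (B + 4*pi^2*t)" if P': "part 0 1 m xs" for m xs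
  proof -
    have "psum \<psi> m xs = psum \<psi>' m xs" by (rule psum_cong[OF P' \<psi>e])
    also have "\<dots> \<le> psum \<phi> m xs + psum (\<lambda>x. \<phi> (hh t x) + ln (hder t x)) m xs"
      unfolding \<psi>'_def by (rule psum_diff)
    also have "psum (\<lambda>x. \<phi> (hh t x) + ln (hder t x)) m xs \<le> psum (\<lambda>x. \<phi> (hh t x)) m xs + psum (\<lambda>x. ln (hder t x)) m xs"
      by (rule psum_add)
    finally show ?thesis using Bphi[OF P'] comp[OF P'] lnhd[OF P'] unfolding \<phi>_def by linarith
  qed
  have bv: "bv01 \<psi>" by (rule bv_of_bound(1)[OF bnd])
  have SUPge: "(SUP x\<in>{0..1}. distM M (compM M g (\<lambda>x. x) x) (compM M g (hh t) x)) \<ge> 0"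
  proof -
    obtain Mg where Mg: "\<And>x. x \<in> {0..1} \<Longrightarrow> \<bar>g x\<bar> \<le> Mg"
    proof -
      have "continuous_on {0..1} g" by (rule DERIV_continuous_on[OF gd])
      then have "bounded (g ` {0..1})" by (rule compact_imp_bounded[OF compact_continuous_image[OF _ compact_Icc]])
      then obtain B where "\<forall>y\<in>g`{0..1}. norm y \<le> B" unfolding bounded_iff by auto
      then have "\<And>x. x \<in> {0..1} \<Longrightarrow> \<bar>g x\<bar> \<le> B" by (metis image_eqI real_norm_def)
      then show ?thesis using that by blast
    qed
    have ub: "distM M (compM M g (\<lambda>x. x) x) (compM M g (hh t) x) \<le> 2 + 2 * Mg" if x: "x \<in> {0..1}" for x
    proof (cases M)
      case Intv
      have hx: "hh t x \<in> {0..1}" using hr x by blast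
      have "\<bar>g x - g (hh t x)\<bar> \<le> \<bar>g x\<bar> + \<bar>g (hh t x)\<bar>" by linarith
      also have "\<dots> \<le> Mg + Mg" using Mg[OF x] Mg[OF hx] by linarith
      finally show ?thesis using Intv by simp
    next
      case Circ
      have "cmod (cis a - cis b) \<le> 2" for a b
        using norm_triangle_ineq4[of "cis a" "cis b"] by simp
      moreover have "0 \<le> Mg" using Mg[of 0] by simp
      ultimately show ?thesis using Circ by (smt (verit) distM.simps(2))
    qed
    have nn: "distM M a b \<ge> 0" for a b by (cases M) auto
    have "bdd_above ((\<lambda>x. distM M (compM M g (\<lambda>x. x) x) (compM M g (hh t) x)) ` {0..1})"
      unfolding bdd_above_def using ub by blast
    then have "distM M (compM M g (\<lambda>x. x) 0) (compM M g (hh t) 0) \<le> (SUP x\<in>{0..1}. distM M (compM M g (\<lambda>x. x) x) (compM M g (hh t) x))"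
      by (rule cSUP_upper[rotated]) simp
    then show ?thesis using nn by (smt (verit))
  qed
  have "dDiff M (compM M g (\<lambda>x. x)) (compM M g (hh t)) = 
     (SUP x\<in>{0..1}. distM M (compM M g (\<lambda>x. x) x) (compM M g (hh t) x)) + (\<bar>\<psi> 0\<bar> + V01 \<psi>)"
    unfolding dDiff_def BVnorm_def \<psi>_def by simp
  then have dge: "V01 \<psi> \<le> dDiff M (compM M g (\<lambda>x. x)) (compM M g (hh t))" using SUPge by simp
  have "psum (\<lambda>x. ln (g' x) - ln (g' (hh t x))) m xs = psum (\<lambda>x. \<psi>' x + ln (hder t x)) m xs"
    unfolding \<psi>'_def \<phi>_def by (simp add: algebra_simps)
  also have "\<dots> \<le> psum \<psi>' m xs + psum (\<lambda>x. ln (hder t x)) m xs" by (rule psum_add)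
  also have "psum \<psi>' m xs = psum \<psi> m xs" by (rule psum_cong[OF P \<psi>e, symmetric])
  also have "psum \<psi> m xs \<le> V01 \<psi>" by (rule psum_le_V01[OF bv P])
  finally show ?thesis using dge lnhd[OF P] by linarith
qed

theorem mainTheorem3:
  fixes M :: space and g :: "real \<Rightarrow> real"
  assumes "g \<in> Diff1BV M" and "g \<notin> Diff1AC M"
  shows "\<not> (\<forall>f\<in>Diff1BV M. \<forall>\<epsilon>>0. \<exists>\<delta>>0. \<forall>h\<in>Diff1BV M.
            dDiff M f h < \<delta> \<longrightarrow> dDiff M (compM M g f) (compM M g h) < \<epsilon>)"
proof
  assume C: "\<forall>f\<in>Diff1BV M. \<forall>\<epsilon>>0. \<exists>\<delta>>0. \<forall>h\<in>Diff1BV M.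
            dDiff M f h < \<delta> \<longrightarrow> dDiff M (compM M g f) (compM M g h) < \<epsilon>"
  have gB: "g \<in> Diff1 M" "bv01 (D g)" using assms(1) unfolding Diff1BV_def by auto
  obtain g' where g': "continuous_on {0..1} g'"
      "\<And>x. x \<in> {0..1} \<Longrightarrow> (g has_real_derivative g' x) (at x within {0..1})"
      "\<And>x. x \<in> {0..1} \<Longrightarrow> g' x > 0"
    using diff1_deriv[OF gB(1)] by blast
  have Dg: "D g x = g' x" if "x \<in> {0..1}" for x by (rule D_eq[OF g'(2)[OF that] that])
  have ne: "{0..1::real} \<noteq> {}" by simp
  obtain x0 where x0: "x0 \<in> {0..1}" "\<forall>y\<in>{0..1}. g' x0 \<le> g' y"
    using continuous_attains_inf[OF compact_Icc ne g'(1)] by blast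
  define c0 where "c0 = g' x0"
  have c0: "c0 > 0" "\<And>y. y \<in> {0..1} \<Longrightarrow> c0 \<le> g' y" unfolding c0_def using x0 g'(3) by auto
  obtain x1 where x1: "x1 \<in> {0..1}" "\<forall>y\<in>{0..1}. g' y \<le> g' x1"
    using continuous_attains_sup[OF compact_Icc ne g'(1)] by blast
  define Mg where "Mg = g' x1"
  have Mg: "Mg > 0" "\<And>y. y \<in> {0..1} \<Longrightarrow> g' y \<le> Mg" unfolding Mg_def using x1 g'(3) by auto
  obtain Bg where Bg: "\<And>m xs. part 0 1 m xs \<Longrightarrow> psum (D g) m xs \<le> Bg"
  proof -
    obtain Bg where "\<forall>y\<in>var_sums (D g). y \<le> Bg" using gB(2) unfolding bv01_def bdd_above_def by blast
    then have "\<And>m xs. part 0 1 m xs \<Longrightarrow> psum (D g) m xs \<le> Bg" unfolding var_sums_eq by blast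
    then show ?thesis using that by blast
  qed
  define \<phi> where "\<phi> = (\<lambda>x. ln (g' x))"
  have Bphi: "psum \<phi> m xs \<le> Bg / c0" if P: "part 0 1 m xs" for m xs
  proof -
    have "psum \<phi> m xs \<le> (\<Sum>i<m. \<bar>g' (xs (Suc i)) - g' (xs i)\<bar> / c0)"
      unfolding psum_def \<phi>_def
    proof (rule sum_mono)
      fix i assume "i \<in> {..<m}"
      then have "xs i \<in> {0..1}" "xs (Suc i) \<in> {0..1}" using part_range[OF P] by auto
      then show "\<bar>ln (g' (xs (Suc i))) - ln (g' (xs i))\<bar> \<le> \<bar>g' (xs (Suc i)) - g' (xs i)\<bar> / c0"
        using c0 by (intro ln_lip) auto
    qed
    also have "\<dots> = psum g' m xs / c0" unfolding psum_def by (simp add: sum_divide_distrib)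
    also have "psum g' m xs = psum (D g) m xs" by (rule psum_cong[OF P Dg[symmetric]])
    also have "psum (D g) m xs / c0 \<le> Bg / c0" using Bg[OF P] c0(1) by (intro divide_right_mono) auto
    finally show ?thesis .
  qed
  have cont: "continuous_on {0..1} \<phi>" unfolding \<phi>_def
    by (rule continuous_on_ln[OF g'(1)]) (use g'(3) in force)
  have H: "\<exists>T>0. T \<le> 1/pi \<and> (\<forall>t m xs. 0 < t \<and> t \<le> T \<and> part 0 1 m xs \<longrightarrow> psum (\<lambda>x. \<phi> x - \<phi> (hh t x)) m xs \<le> \<epsilon>)"
    if e: "\<epsilon> > 0" for \<epsilon>
  proof -
    have e2: "\<epsilon>/2 > 0" using e by simp
    obtain \<delta> where \<delta>: "\<delta> > 0" "\<And>h. h \<in> Diff1BV M \<Longrightarrow> dDiff M (\<lambda>x. x) h < \<delta> \<Longrightarrow>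
        dDiff M (compM M g (\<lambda>x. x)) (compM M g h) < \<epsilon>/2"
      using C id_diff1(1)[of M] e2 by blast
    define K where "K = 2*pi + 4*pi^2"
    have K: "K > 0" unfolding K_def by (simp add: add_pos_pos)
    define T where "T = min (1/(2*pi)) (min (\<delta> / (2*K)) (\<epsilon>/(8*pi^2)))"
    have T0: "T > 0" unfolding T_def using \<delta>(1) K e by auto
    have T1: "T \<le> 1/(2*pi)" unfolding T_def by simp
    have T2: "T \<le> \<delta> / (2*K)" unfolding T_def by simp
    have T3: "T \<le> \<epsilon>/(8*pi^2)" unfolding T_def by simp
    have "1/(2*pi) \<le> 1/pi" by (intro divide_left_mono) auto
    then have Tpi: "T \<le> 1/pi" using T1 by linarith
    show ?thesis
    proof (intro exI[of _ T] conjI allI impI T0 Tpi)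
      fix t m xs assume A: "0 < t \<and> t \<le> T \<and> part 0 1 m xs"
      then have t: "0 < t" "t \<le> 1/(2*pi)" "t \<le> T" and P: "part 0 1 m xs" using T1 by auto
      have "dDiff M (\<lambda>x. x) (hh t) \<le> K * t" unfolding K_def by (rule dist_upper) (use t in auto)
      also have "K * t \<le> K * (\<delta> / (2*K))" using t T2 K by (intro mult_left_mono) auto
      also have "\<dots> < \<delta>" using K \<delta>(1) by simp
      finally have "dDiff M (\<lambda>x. x) (hh t) < \<delta>" .
      then have d: "dDiff M (compM M g (\<lambda>x. x)) (compM M g (hh t)) < \<epsilon>/2"
        using \<delta>(2) hh_diff1(1)[of t M] t by auto
      have "psum (\<lambda>x. \<phi> x - \<phi> (hh t x)) m xs \<le> dDiff M (compM M g (\<lambda>x. x)) (compM M g (hh t)) + 4*pi^2*t"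
        unfolding \<phi>_def by (rule lower[OF gB(1) g'(2) g'(3) Bphi[unfolded \<phi>_def] t(1,2) P])
      also have "4*pi^2*t \<le> 4*pi^2*(\<epsilon>/(8*pi^2))" using t T3 by (intro mult_left_mono) auto
      also have "4*pi^2*(\<epsilon>/(8*pi^2)) = \<epsilon>/2" by (simp add: field_simps)
      finally show "psum (\<lambda>x. \<phi> x - \<phi> (hh t x)) m xs \<le> \<epsilon>" using d by simp
    qed
  qed
  have ac: "abs_cont01 \<phi>" by (rule core_ac[OF cont Bphi H])
  have "abs_cont01 (D g)"
  proof (rule ac_transfer[OF ac Mg(1)])
    fix x y :: real assume xy: "x \<in> {0..1}" "y \<in> {0..1}"
    show "\<bar>D g x - D g y\<bar> \<le> Mg * \<bar>\<phi> x - \<phi> y\<bar>"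
      unfolding Dg[OF xy(1)] Dg[OF xy(2)] \<phi>_def
      by (rule exp_side) (use g'(3) Mg(2) xy in auto)
  qed
  then have "g \<in> Diff1AC M" using assms(1) unfolding Diff1AC_def by blast
  then show False using assms(2) by blast
qed

end
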